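(* Let $\Delta>0$. For all sufficiently large $n$, every tree $T$ with $n$ vertices and maximum degree at most $\Delta$ satisfies at least one of the following: (A) $\lambda(T)\ge n\log\log n/(10^5\log n)$; (B) $10^3\log n/\log\log n\le k(T)<10^2\log n$; (C) $10^2\log n\le k(T)<10^{-6}\log^2 n/\log\log n$; (D) $k(T)=10^{-6}\log^2 n/\log\log n$.
   Context: $\log$ is the natural logarithm. A path with $\ell$ vertices has length $\ell-1$. A bare path in a tree $T$ is a path in $T$ all of whose interior vertices have degree exactly $2$ in $T$. A set $Q$ of vertices of a graph is $k$-separated if every two distinct vertices of $Q$ are at distance at least $k$ in the graph. For a tree $T$ with $n$ vertices: $\lambda(T)$ is the size of a largest $20$-separated set of leaves of $T$; $k'(T)=\max\{k: T\text{ contains at least } n/(90k) \text{ vertex-disjoint bare paths of length } k\}$; and $k(T)=\min\{k'(T),\,10^{-6}\log^2 n/\log\log n\}$. *)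

theory Defs
  imports Complex_Main
begin

definition graph :: "nat set \<Rightarrow> (nat \<Rightarrow> nat \<Rightarrow> bool) \<Rightarrow> bool" where
  "graph V E \<longleftrightarrow> finite V \<and> (\<forall>x y. E x y \<longrightarrow> x \<in> V \<and> y \<in> V \<and> x \<noteq> y \<and> E y x)"

text \<open>A path is a nonempty list of distinct vertices, consecutive ones adjacent.
A path with l vertices has length l - 1.\<close>
definition is_path :: "nat set \<Rightarrow> (nat \<Rightarrow> nat \<Rightarrow> bool) \<Rightarrow> nat list \<Rightarrow> bool" where
  "is_path V E p \<longleftrightarrow> p \<noteq> [] \<and> distinct p \<and> set p \<subseteq> V \<and>
     (\<forall>i. Suc i < length p \<longrightarrow> E (p ! i) (p ! Suc i))"

definition connected_graph :: "nat set \<Rightarrow> (nat \<Rightarrow> nat \<Rightarrow> bool) \<Rightarrow> bool" where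
  "connected_graph V E \<longleftrightarrow>
     (\<forall>u\<in>V. \<forall>v\<in>V. \<exists>p. is_path V E p \<and> hd p = u \<and> last p = v)"

definition is_cycle :: "nat set \<Rightarrow> (nat \<Rightarrow> nat \<Rightarrow> bool) \<Rightarrow> nat list \<Rightarrow> bool" where
  "is_cycle V E c \<longleftrightarrow> length c \<ge> 3 \<and> is_path V E c \<and> E (last c) (hd c)"

definition is_tree :: "nat set \<Rightarrow> (nat \<Rightarrow> nat \<Rightarrow> bool) \<Rightarrow> bool" where
  "is_tree V E \<longleftrightarrow> graph V E \<and> V \<noteq> {} \<and> connected_graph V E \<and> \<not> (\<exists>c. is_cycle V E c)"

definition degree :: "nat set \<Rightarrow> (nat \<Rightarrow> nat \<Rightarrow> bool) \<Rightarrow> nat \<Rightarrow> nat" where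
  "degree V E v = card {u \<in> V. E v u}"

definition leaves :: "nat set \<Rightarrow> (nat \<Rightarrow> nat \<Rightarrow> bool) \<Rightarrow> nat set" where
  "leaves V E = {v \<in> V. degree V E v = 1}"

definition dist :: "nat set \<Rightarrow> (nat \<Rightarrow> nat \<Rightarrow> bool) \<Rightarrow> nat \<Rightarrow> nat \<Rightarrow> nat" where
  "dist V E u v = (LEAST k. \<exists>p. is_path V E p \<and> hd p = u \<and> last p = v \<and> length p = k + 1)"

definition separated :: "nat set \<Rightarrow> (nat \<Rightarrow> nat \<Rightarrow> bool) \<Rightarrow> nat \<Rightarrow> nat set \<Rightarrow> bool" where
  "separated V E k Q \<longleftrightarrow> (\<forall>u\<in>Q. \<forall>v\<in>Q. u \<noteq> v \<longrightarrow> dist V E u v \<ge> k)"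

definition lam :: "nat set \<Rightarrow> (nat \<Rightarrow> nat \<Rightarrow> bool) \<Rightarrow> nat" where
  "lam V E = Max {card Q | Q. Q \<subseteq> leaves V E \<and> separated V E 20 Q}"

definition bare_path :: "nat set \<Rightarrow> (nat \<Rightarrow> nat \<Rightarrow> bool) \<Rightarrow> nat list \<Rightarrow> bool" where
  "bare_path V E p \<longleftrightarrow> is_path V E p \<and>
     (\<forall>i. 0 < i \<and> i + 1 < length p \<longrightarrow> degree V E (p ! i) = 2)"

text \<open>Division is real division,
so k = 0 is always admissible (n/0 = 0), giving k'(T) = 0 if no k \<ge> 1 works.\<close>
definition kprime :: "nat set \<Rightarrow> (nat \<Rightarrow> nat \<Rightarrow> bool) \<Rightarrow> nat" where
  "kprime V E = Max {k. \<exists>P. finite P \<and>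
       (\<forall>p\<in>P. bare_path V E p \<and> length p = k + 1) \<and>
       (\<forall>p\<in>P. \<forall>q\<in>P. p \<noteq> q \<longrightarrow> set p \<inter> set q = {}) \<and>
       real (card P) \<ge> real (card V) / (90 * real k)}"

definition kT :: "nat set \<Rightarrow> (nat \<Rightarrow> nat \<Rightarrow> bool) \<Rightarrow> real" where
  "kT V E = min (real (kprime V E))
     (ln (real (card V)) ^ 2 / ln (ln (real (card V))) / 10 ^ 6)"

end

theory Submission
  imports Defs
begin

definition nbrs :: "nat set \<Rightarrow> (nat \<Rightarrow> nat \<Rightarrow> bool) \<Rightarrow> nat \<Rightarrow> nat set" where
  "nbrs V E v = {u \<in> V. E v u}"

lemma degree_nbrs: "degree V E v = card (nbrs V E v)"
  by (simp add: degree_def nbrs_def)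

lemma graph_sym: "graph V E \<Longrightarrow> E x y \<Longrightarrow> E y x"
  by (simp add: graph_def)

lemma graph_in: "graph V E \<Longrightarrow> E x y \<Longrightarrow> x \<in> V \<and> y \<in> V \<and> x \<noteq> y"
  by (simp add: graph_def)

lemma graph_finite: "graph V E \<Longrightarrow> finite V"
  by (simp add: graph_def)

lemma is_path_single[simp]: "is_path V E [x] \<longleftrightarrow> x \<in> V"
  by (simp add: is_path_def)

lemma is_path_nth_in: "is_path V E p \<Longrightarrow> i < length p \<Longrightarrow> p ! i \<in> V"
  by (auto simp: is_path_def)

lemma is_path_adj: "is_path V E p \<Longrightarrow> Suc i < length p \<Longrightarrow> E (p ! i) (p ! Suc i)"
  by (auto simp: is_path_def)

lemma is_path_mono: "is_path V E p \<Longrightarrow> set p \<subseteq> W \<Longrightarrow> is_path W E p"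
  by (auto simp: is_path_def)

lemma is_path_mono_E: "is_path V E p \<Longrightarrow> (\<And>x y. x \<in> set p \<Longrightarrow> y \<in> set p \<Longrightarrow> E x y \<Longrightarrow> E' x y) \<Longrightarrow> is_path V E' p"
  unfolding is_path_def by (metis Suc_lessD nth_mem)

lemma is_path_subset: "is_path W E p \<Longrightarrow> W \<subseteq> V \<Longrightarrow> is_path V E p"
  by (auto simp: is_path_def)

definition restr :: "(nat \<Rightarrow> nat \<Rightarrow> bool) \<Rightarrow> nat set \<Rightarrow> nat \<Rightarrow> nat \<Rightarrow> bool" where
  "restr E W a b \<longleftrightarrow> E a b \<and> a \<in> W \<and> b \<in> W"

lemma is_path_restr: "is_path W (restr E W) p \<longleftrightarrow> is_path W E p"
  unfolding is_path_def restr_def by (metis Suc_lessD nth_mem subsetD)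

lemma is_path_append1:
  assumes "is_path V E p" "y \<in> V" "y \<notin> set p" "E (last p) y"
  shows "is_path V E (p @ [y])"
  using assms unfolding is_path_def
  apply (auto simp: nth_append)
  by (metis One_nat_def Suc_lessI diff_Suc_1 last_conv_nth length_greater_0_conv)

lemma is_path_take: "is_path V E p \<Longrightarrow> 0 < j \<Longrightarrow> is_path V E (take j p)"
  unfolding is_path_def by (auto dest: in_set_takeD)

lemma is_path_drop: "is_path V E p \<Longrightarrow> j < length p \<Longrightarrow> is_path V E (drop j p)"
  unfolding is_path_def by (auto dest: in_set_dropD)

lemma is_path_rev: assumes "graph V E" "is_path V E p" shows "is_path V E (rev p)"
  unfolding is_path_def
proof (intro conjI allI impI)
  fix i assume i: "Suc i < length (rev p)"
  have "E (p ! (length p - Suc (Suc i))) (p ! Suc (length p - Suc (Suc i)))"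
    using is_path_adj[OF assms(2), of "length p - Suc (Suc i)"] i by auto
  moreover have "Suc (length p - Suc (Suc i)) = length p - Suc i" using i by simp
  ultimately show "E (rev p ! i) (rev p ! Suc i)"
    using i assms(1) by (auto simp: rev_nth graph_def)
qed (use assms in \<open>auto simp: is_path_def\<close>)

lemma hd_rev': "p \<noteq> [] \<Longrightarrow> hd (rev p) = last p" by (simp add: hd_rev)
lemma last_rev': "p \<noteq> [] \<Longrightarrow> last (rev p) = hd p" by (simp add: last_rev)

lemma is_path_ne: "is_path V E p \<Longrightarrow> p \<noteq> []" by (simp add: is_path_def)

lemma rtr_path:
  assumes "(restr E W)\<^sup>*\<^sup>* x y" "x \<in> W"
  shows "\<exists>p. is_path W E p \<and> hd p = x \<and> last p = y"
  using assms
proof (induction rule: rtranclp_induct)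
  case base
  then show ?case by (intro exI[of _ "[x]"]) auto
next
  case (step y z)
  then obtain p where p: "is_path W E p" "hd p = x" "last p = y" by auto
  have zW: "z \<in> W" and yz: "E y z" using step(2) by (auto simp: restr_def)
  show ?case
  proof (cases "z \<in> set p")
    case True
    then obtain i where i: "i < length p" "p ! i = z" by (auto simp: in_set_conv_nth)
    have "is_path W E (take (Suc i) p)" by (rule is_path_take[OF p(1)]) simp
    moreover have "hd (take (Suc i) p) = x" using p i
      by (metis hd_take is_path_ne zero_less_Suc)
    moreover have "last (take (Suc i) p) = z" using i by (simp add: take_Suc_conv_app_nth)
    ultimately show ?thesis by blast
  next
    case False
    have "is_path W E (p @ [z])" using p zW False yz by (intro is_path_append1) auto
    moreover have "hd (p @ [z]) = x" using p is_path_ne by fastforce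
    ultimately show ?thesis by (intro exI[of _ "p @ [z]"]) auto
  qed
qed

lemma path_rtr:
  assumes "is_path W E p" "i < length p"
  shows "(restr E W)\<^sup>*\<^sup>* (hd p) (p ! i)"
  using assms(2)
proof (induction i)
  case 0
  then show ?case using assms(1) by (simp add: hd_conv_nth is_path_ne)
next
  case (Suc i)
  have "restr E W (p ! i) (p ! Suc i)"
    using assms(1) Suc.prems by (auto simp: restr_def is_path_def)
  then show ?case using Suc by (meson Suc_lessD rtranclp.rtrancl_into_rtrancl)
qed

lemma path_rtr_last:
  assumes "is_path W E p"
  shows "(restr E W)\<^sup>*\<^sup>* (hd p) (last p)"
  using path_rtr[OF assms, of "length p - 1"] assms
  by (simp add: last_conv_nth is_path_ne)

lemma restr_sym: "graph V E \<Longrightarrow> restr E W a b \<Longrightarrow> restr E W b a"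
  by (auto simp: restr_def graph_def)

lemma rtr_sym: assumes "graph V E" "(restr E W)\<^sup>*\<^sup>* a b" shows "(restr E W)\<^sup>*\<^sup>* b a"
  using assms(2)
  by (induction rule: rtranclp_induct)
     (auto intro: converse_rtranclp_into_rtranclp restr_sym[OF assms(1)])

lemma rtr_in: "(restr E W)\<^sup>*\<^sup>* a b \<Longrightarrow> a \<in> W \<Longrightarrow> b \<in> W"
  by (induction rule: rtranclp_induct) (auto simp: restr_def)

lemma path_length_le: "is_path V E p \<Longrightarrow> finite V \<Longrightarrow> length p \<le> card V"
  unfolding is_path_def by (metis card_mono distinct_card)



lemma tree_graph: "is_tree V E \<Longrightarrow> graph V E" by (simp add: is_tree_def)

lemma tree_conn: "is_tree V E \<Longrightarrow> u \<in> V \<Longrightarrow> v \<in> V \<Longrightarrow> \<exists>p. is_path V E p \<and> hd p = u \<and> last p = v"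
  by (auto simp: is_tree_def connected_graph_def)

lemma tree_nocycle: "is_tree V E \<Longrightarrow> \<not> is_cycle V E c"
  by (auto simp: is_tree_def)

lemma max_path_exists:
  assumes "finite V" "is_path V E p0" "Q p0" 
  shows "\<exists>p. is_path V E p \<and> Q p \<and> (\<forall>q. is_path V E q \<and> Q q \<longrightarrow> length q \<le> length p)"
proof -
  have b: "\<forall>y. is_path V E y \<and> Q y \<longrightarrow> length y < Suc (card V)"
    using path_length_le[OF _ assms(1)] less_Suc_eq_le by blast
  have "\<exists>p. (is_path V E p \<and> Q p) \<and> (\<forall>q. (is_path V E q \<and> Q q) \<longrightarrow> length q \<le> length p)"
    by (rule Lattices_Big.ex_has_greatest_nat[of "\<lambda>p. is_path V E p \<and> Q p" p0 length "Suc (card V)"])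
      (use assms b in auto)
  then show ?thesis by blast
qed

lemma leaf_exists:
  assumes T: "is_tree V E" and c: "card V \<ge> 2"
  shows "\<exists>l w. l \<in> V \<and> nbrs V E l = {w}"
proof -
  have G: "graph V E" and fin: "finite V" using T by (auto simp: is_tree_def graph_def)
  have "card (V - {}) > 0" using c by simp
  then obtain u where u: "u \<in> V" by (metis Diff_empty card_gt_0_iff ex_in_conv)
  have "card (V - {u}) > 0" using c u fin by simp
  then obtain v where v: "v \<in> V - {u}" by (metis card_gt_0_iff ex_in_conv)
  have uv: "u \<in> V" "v \<in> V" "u \<noteq> v" using u v by auto
  obtain p0 where p0: "is_path V E p0" "hd p0 = u" "last p0 = v" using tree_conn[OF T uv(1,2)] by blast
  have l0: "length p0 \<ge> 2"
  proof (rule ccontr)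
    assume "\<not> ?thesis"
    then have "length p0 - 1 = 0" by simp
    then have "last p0 = hd p0" using is_path_ne[OF p0(1)] by (simp add: last_conv_nth hd_conv_nth)
    then show False using p0 uv(3) by simp
  qed
  obtain p where p1: "is_path V E p" and pmax0: "\<forall>q. is_path V E q \<and> True \<longrightarrow> length q \<le> length p"
    using max_path_exists[OF fin p0(1), of "\<lambda>_. True"] by blast
  have pmax: "length q \<le> length p" if "is_path V E q" for q using pmax0 that by blast
  have "length p \<ge> 2" using pmax[OF p0(1)] l0 by linarith
  note p = p1 this
  define n where "n = length p"
  define x where "x = last p"
  define w where "w = p ! (n - 2)"
  have xn: "x = p ! (n - 1)" using p(2) unfolding x_def n_def by (simp add: last_conv_nth is_path_ne[OF p(1)])
  have sn: "Suc (n - 2) = n - 1" "Suc (n - 2) < length p" using p(2) by (auto simp: n_def)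
  have "E w x" using is_path_adj[OF p(1), of "n - 2"] sn unfolding w_def xn by simp
  then have Exw: "E x w" using G by (simp add: graph_sym)
  have xV: "x \<in> V" and wV: "w \<in> V" using graph_in[OF G Exw] by auto
  have "nbrs V E x = {w}"
  proof
    show "{w} \<subseteq> nbrs V E x" using Exw wV by (simp add: nbrs_def)
  next
    show "nbrs V E x \<subseteq> {w}"
    proof
      fix y assume "y \<in> nbrs V E x"
      then have yV: "y \<in> V" and Exy: "E x y" by (auto simp: nbrs_def)
      show "y \<in> {w}"
      proof (cases "y \<in> set p")
        case False
        have "is_path V E (p @ [y])" using p(1) yV False Exy x_def by (intro is_path_append1) auto
        from pmax[OF this] show ?thesis by simp
      next
        case True
        then obtain j where j: "j < n" "p ! j = y" by (auto simp: in_set_conv_nth n_def)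
        have "j \<noteq> n - 1" using j xn graph_in[OF G Exy] by auto
        moreover have "j \<noteq> n - 2 \<Longrightarrow> False"
        proof -
          assume "j \<noteq> n - 2"
          with j \<open>j \<noteq> n - 1\<close> have jn: "j + 3 \<le> n" by linarith
          define c where "c = drop j p"
          have "is_path V E c" unfolding c_def using j by (intro is_path_drop[OF p(1)]) (simp add: n_def)
          moreover have "length c \<ge> 3" using jn by (simp add: c_def n_def)
          moreover have "hd c = y" using j by (simp add: c_def hd_drop_conv_nth n_def)
          moreover have "last c = x" using j by (simp add: c_def x_def n_def)
          ultimately have "is_cycle V E c" using Exy by (simp add: is_cycle_def)
          then show False using tree_nocycle[OF T] by blast
        qed
        ultimately show ?thesis using j by (auto simp: w_def)
      qed
    qed
  qed
  then show ?thesis using xV by blast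
qed

lemma path_avoid_leaf:
  assumes G: "graph V E" and p: "is_path V E p" and l: "nbrs V E l = {w}"
    and h: "hd p \<noteq> l" and la: "last p \<noteq> l"
  shows "l \<notin> set p"
proof
  assume "l \<in> set p"
  then obtain i where i: "i < length p" "p ! i = l" by (auto simp: in_set_conv_nth)
  have ne: "p \<noteq> []" using is_path_ne[OF p] .
  have i0: "i \<noteq> 0"
  proof
    assume "i = 0"
    then have "hd p = l" using i ne by (simp add: hd_conv_nth)
    then show False using h by simp
  qed
  have i1: "i \<noteq> length p - 1"
  proof
    assume "i = length p - 1"
    then have "last p = l" using i ne by (simp add: last_conv_nth)
    then show False using la by simp
  qed
  have a: "E (p ! (i - 1)) l" using is_path_adj[OF p, of "i - 1"] i i0 by simp
  have b: "E l (p ! Suc i)" using is_path_adj[OF p, of i] i i1 by simp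
  have "p ! (i - 1) \<in> nbrs V E l" "p ! Suc i \<in> nbrs V E l"
    using graph_in[OF G a] graph_in[OF G b] graph_sym[OF G a] b by (auto simp: nbrs_def)
  moreover have "p ! (i - 1) \<noteq> p ! Suc i"
    using p i i0 i1 by (auto simp: is_path_def nth_eq_iff_index_eq)
  ultimately show False using l by auto
qed

lemma graph_restr:
  assumes G: "graph V E" and W: "W \<subseteq> V"
  shows "graph W (restr E W)"
proof -
  have "finite W" using G W finite_subset by (auto simp: graph_def)
  moreover have "x \<in> W \<and> y \<in> W \<and> x \<noteq> y \<and> restr E W y x" if "restr E W x y" for x y
  proof -
  from that have e: "E x y" "x \<in> W" "y \<in> W" by (auto simp: restr_def)
  show "x \<in> W \<and> y \<in> W \<and> x \<noteq> y \<and> restr E W y x"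
    using e graph_in[OF G e(1)] graph_sym[OF G e(1)] by (auto simp: restr_def)
  qed
  ultimately show ?thesis unfolding graph_def by blast
qed

lemma cycle_restr:
  assumes "is_cycle W (restr E W) c" "W \<subseteq> V"
  shows "is_cycle V E c"
proof -
  have "is_path W E c" using assms(1) by (simp add: is_cycle_def is_path_restr)
  then have "is_path V E c" using assms(2) by (rule is_path_subset)
  then show ?thesis using assms(1) by (auto simp: is_cycle_def restr_def)
qed

lemma tree_restr:
  assumes T: "is_tree V E" and W: "W \<subseteq> V" "W \<noteq> {}"
    and conn: "\<And>u v. u \<in> W \<Longrightarrow> v \<in> W \<Longrightarrow> \<exists>p. is_path W E p \<and> hd p = u \<and> last p = v"
  shows "is_tree W (restr E W)"
proof -
  have G: "graph V E" using T by (simp add: is_tree_def)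
  have "connected_graph W (restr E W)"
    unfolding connected_graph_def is_path_restr using conn by blast
  moreover have "\<not> (\<exists>c. is_cycle W (restr E W) c)"
    using cycle_restr[OF _ W(1)] tree_nocycle[OF T] by blast
  ultimately show ?thesis using graph_restr[OF G W(1)] W(2) by (simp add: is_tree_def)
qed

lemma tree_remove_leaf:
  assumes T: "is_tree V E" and c: "card V \<ge> 2" and lV: "l \<in> V" and l: "nbrs V E l = {w}"
  shows "is_tree (V - {l}) (restr E (V - {l}))"
proof (rule tree_restr[OF T])
  have G: "graph V E" using T by (simp add: is_tree_def)
  have fin: "finite V" using G by (simp add: graph_def)
  have "card (V - {l}) > 0" using c fin lV by simp
  then show "V - {l} \<noteq> {}" by (intro notI) simp
  fix u v assume u: "u \<in> V - {l}" and v: "v \<in> V - {l}"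
  obtain p where p: "is_path V E p" "hd p = u" "last p = v" using tree_conn[OF T] u v by blast
  have "l \<notin> set p" using path_avoid_leaf[OF G p(1) l] p u v by auto
  moreover have "set p \<subseteq> V" using p(1) by (simp add: is_path_def)
  ultimately have "set p \<subseteq> V - {l}" by blast
  then have "is_path (V - {l}) E p" by (rule is_path_mono[OF p(1)])
  then show "\<exists>p. is_path (V - {l}) E p \<and> hd p = u \<and> last p = v"
    using p by auto
qed auto

lemma handshake_aux:
  "\<forall>V E. is_tree V E \<and> card V = n \<longrightarrow> (\<Sum>v\<in>V. degree V E v) + 2 = 2 * card V"
proof (induction n)
  case 0
  show ?case
  proof (intro allI impI)
    fix V E assume a: "is_tree V E \<and> card V = 0"
    then have "finite V" "V \<noteq> {}" "card V = 0" by (auto simp: is_tree_def graph_def)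
    then show "(\<Sum>v\<in>V. degree V E v) + 2 = 2 * card V" by simp
  qed
next
  case (Suc m)
  show ?case
  proof (intro allI impI)
    fix V E assume a: "is_tree V E \<and> card V = Suc m"
    then have T: "is_tree V E" and cV: "card V = Suc m" by auto
    have G: "graph V E" using T by (simp add: is_tree_def)
    have fin: "finite V" using G by (simp add: graph_def)
    show "(\<Sum>v\<in>V. degree V E v) + 2 = 2 * card V"
    proof (cases "m = 0")
      case True
      then have "card V = 1" using cV by simp
      then obtain x where V: "V = {x}" by (rule card_1_singletonE)
      have "nbrs V E x = {}" using V graph_in[OF G] by (auto simp: nbrs_def)
      then have "degree V E x = 0" by (simp add: degree_nbrs)
      then show ?thesis using V by simp
    next
      case False
      then have c2: "card V \<ge> 2" using cV by simp
      obtain l w where lV: "l \<in> V" and l: "nbrs V E l = {w}" using leaf_exists[OF T c2] by blast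
      define V' where "V' = V - {l}"
      have T': "is_tree V' (restr E V')" using tree_remove_leaf[OF T c2 lV l] V'_def by simp
      have cV': "card V' = m" using cV lV fin by (simp add: V'_def)
      have IH: "(\<Sum>v\<in>V'. degree V' (restr E V') v) + 2 = 2 * card V'"
        using Suc.IH T' cV' by blast
      have wV: "w \<in> V" and Elw: "E l w" using l by (auto simp: nbrs_def)
      have wl: "w \<noteq> l" using graph_in[OF G Elw] by auto
      have wV': "w \<in> V'" using wV wl V'_def by simp
      have degl: "degree V E l = 1" using l by (simp add: degree_nbrs)
      have deg: "degree V E v = degree V' (restr E V') v + (if v = w then 1 else 0)" if v: "v \<in> V'" for v
      proof -
        have eq: "nbrs V E v = nbrs V' (restr E V') v \<union> (if v = w then {l} else {})"
        proof -
          have vV: "v \<in> V" using v V'_def by simp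
          have "E v l \<longleftrightarrow> E l v" using graph_sym[OF G] by blast
          also have "\<dots> \<longleftrightarrow> v \<in> nbrs V E l" using vV by (simp add: nbrs_def)
          also have "\<dots> \<longleftrightarrow> v = w" using l by simp
          finally have "E v l \<longleftrightarrow> v = w" .
          then show ?thesis using v lV by (auto simp: nbrs_def restr_def V'_def)
        qed
        have "l \<notin> nbrs V' (restr E V') v" by (auto simp: nbrs_def V'_def)
        moreover have "finite (nbrs V' (restr E V') v)" using fin by (auto simp: nbrs_def V'_def)
        ultimately show ?thesis unfolding degree_nbrs eq by auto
      qed
      have "(\<Sum>v\<in>V. degree V E v) = degree V E l + (\<Sum>v\<in>V'. degree V E v)"
        using fin lV by (simp add: V'_def sum.remove)
      also have "(\<Sum>v\<in>V'. degree V E v) = (\<Sum>v\<in>V'. degree V' (restr E V') v) + (\<Sum>v\<in>V'. (if v = w then 1 else 0))"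
        using deg by (simp add: sum.distrib)
      also have "(\<Sum>v\<in>V'. (if v = w then 1 else 0::nat)) = 1"
        using wV' fin by (simp add: V'_def)
      finally show ?thesis using IH degl cV cV' by simp
    qed
  qed
qed

lemma handshake: "is_tree V E \<Longrightarrow> (\<Sum>v\<in>V. degree V E v) + 2 = 2 * card V"
  using handshake_aux by blast



definition ball :: "nat set \<Rightarrow> (nat \<Rightarrow> nat \<Rightarrow> bool) \<Rightarrow> nat \<Rightarrow> nat \<Rightarrow> nat set" where
  "ball V E q r = {v. \<exists>p. is_path V E p \<and> hd p = q \<and> last p = v \<and> length p \<le> Suc r}"

lemma ball_sub: "ball V E q r \<subseteq> V"
proof
  fix v assume "v \<in> ball V E q r"
  then obtain p where p: "is_path V E p" "last p = v" by (auto simp: ball_def)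
  have "p \<noteq> []" using is_path_ne[OF p(1)] .
  then have "last p \<in> set p" by simp
  then show "v \<in> V" using p by (auto simp: is_path_def)
qed

lemma ball_sym:
  assumes G: "graph V E" and b: "b \<in> ball V E a r" shows "a \<in> ball V E b r"
proof -
  obtain p where p: "is_path V E p" "hd p = a" "last p = b" "length p \<le> Suc r"
    using b by (auto simp: ball_def)
  have ne: "p \<noteq> []" using is_path_ne[OF p(1)] .
  have "is_path V E (rev p)" using is_path_rev[OF G p(1)] .
  moreover have "hd (rev p) = b" using ne p by (simp add: hd_rev)
  moreover have "last (rev p) = a" using ne p by (simp add: last_rev)
  moreover have "length (rev p) \<le> Suc r" using p by simp
  ultimately show ?thesis unfolding ball_def by blast
qed

lemma ball_self: "a \<in> V \<Longrightarrow> a \<in> ball V E a r"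
  unfolding ball_def by (intro CollectI exI[of _ "[a]"]) simp

lemma ball_zero: "ball V E q 0 \<subseteq> {q}"
proof
  fix v assume "v \<in> ball V E q 0"
  then obtain p where p: "is_path V E p" "hd p = q" "last p = v" "length p \<le> 1"
    by (auto simp: ball_def)
  have ne: "p \<noteq> []" using is_path_ne[OF p(1)] .
  then have "length p - 1 = 0" using p(4) by simp
  then have "last p = hd p" using ne by (simp add: last_conv_nth hd_conv_nth)
  then show "v \<in> {q}" using p by simp
qed

lemma ball_Suc: "ball V E q (Suc r) \<subseteq> ball V E q r \<union> (\<Union>v\<in>ball V E q r. nbrs V E v)"
proof
  fix v assume "v \<in> ball V E q (Suc r)"
  then obtain p where p: "is_path V E p" "hd p = q" "last p = v" "length p \<le> Suc (Suc r)"
    by (auto simp: ball_def)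
  have ne: "p \<noteq> []" using is_path_ne[OF p(1)] .
  show "v \<in> ball V E q r \<union> (\<Union>v\<in>ball V E q r. nbrs V E v)"
  proof (cases "length p \<le> Suc r")
    case True
    then have "v \<in> ball V E q r" using p unfolding ball_def by blast
    then show ?thesis by blast
  next
    case False
    then have lp: "length p = Suc (Suc r)" using p(4) by simp
    define p' where "p' = take (Suc r) p"
    have pp: "is_path V E p'" unfolding p'_def by (rule is_path_take[OF p(1)]) simp
    have "hd p' = q" using p(2) ne by (simp add: p'_def)
    moreover have lp': "last p' = p ! r" using lp by (simp add: p'_def take_Suc_conv_app_nth)
    moreover have "length p' \<le> Suc r" by (simp add: p'_def)
    ultimately have inb: "p ! r \<in> ball V E q r" using pp unfolding ball_def by blast
    have "E (p ! r) (p ! Suc r)" using is_path_adj[OF p(1), of r] lp by simp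
    moreover have "p ! Suc r = v" using p(3) ne lp by (simp add: last_conv_nth)
    moreover have "v \<in> V" using p(1) lp \<open>p ! Suc r = v\<close> is_path_nth_in[OF p(1), of "Suc r"] by simp
    ultimately have "v \<in> nbrs V E (p ! r)" by (simp add: nbrs_def)
    then show ?thesis using inb by blast
  qed
qed

lemma ball_card:
  assumes G: "graph V E" and deg: "\<forall>v\<in>V. degree V E v \<le> D"
  shows "card (ball V E q r) \<le> (D + 1) ^ r"
proof (induction r)
  case 0
  have "card (ball V E q 0) \<le> card {q}" by (rule card_mono) (use ball_zero[of V E q] in auto)
  then show ?case by simp
next
  case (Suc r)
  have fin: "finite V" using G by (simp add: graph_def)
  have finb: "finite (ball V E q r)" using finite_subset[OF ball_sub fin] .
  have finn: "finite (nbrs V E v)" for v using fin by (simp add: nbrs_def)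
  have "card (ball V E q (Suc r)) \<le> card (ball V E q r \<union> (\<Union>v\<in>ball V E q r. nbrs V E v))"
    by (rule card_mono) (use finb finn ball_Suc[of V E q r] in auto)
  also have "\<dots> \<le> card (ball V E q r) + card (\<Union>v\<in>ball V E q r. nbrs V E v)"
    by (rule card_Un_le)
  also have "card (\<Union>v\<in>ball V E q r. nbrs V E v) \<le> (\<Sum>v\<in>ball V E q r. card (nbrs V E v))"
    by (rule card_UN_le[OF finb])
  also have "\<dots> \<le> (\<Sum>v\<in>ball V E q r. D)"
    by (rule sum_mono) (use deg ball_sub[of V E q r] in \<open>auto simp: degree_nbrs\<close>)
  also have "\<dots> = card (ball V E q r) * D" by simp
  finally have "card (ball V E q (Suc r)) \<le> card (ball V E q r) * (D + 1)" by (simp add: algebra_simps)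
  also have "\<dots> \<le> (D + 1) ^ r * (D + 1)" using Suc.IH by (rule mult_right_mono) simp
  finally show ?case by (simp add: mult.commute)
qed

lemma dist_path:
  assumes T: "is_tree V E" and u: "u \<in> V" and v: "v \<in> V"
  shows "\<exists>p. is_path V E p \<and> hd p = u \<and> last p = v \<and> length p = dist V E u v + 1"
proof -
  obtain p where p: "is_path V E p" "hd p = u" "last p = v" using tree_conn[OF T u v] by blast
  have ne: "p \<noteq> []" using is_path_ne[OF p(1)] .
  have "\<exists>k. \<exists>p. is_path V E p \<and> hd p = u \<and> last p = v \<and> length p = k + 1"
    using p ne by (intro exI[of _ "length p - 1"] exI[of _ p]) simp
  then show ?thesis unfolding dist_def by (rule LeastI_ex)
qed

lemma dist_ge:
  assumes T: "is_tree V E" and u: "u \<in> V" and v: "v \<in> V"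
    and all: "\<And>p. is_path V E p \<Longrightarrow> hd p = u \<Longrightarrow> last p = v \<Longrightarrow> length p \<ge> t + 1"
  shows "dist V E u v \<ge> t"
proof -
  obtain p where "is_path V E p" "hd p = u" "last p = v" "length p = dist V E u v + 1"
    using dist_path[OF T u v] by blast
  then show ?thesis using all[of p] by simp
qed

lemma lam_ge:
  assumes G: "graph V E" and Q: "Q \<subseteq> leaves V E" "separated V E 20 Q"
  shows "card Q \<le> lam V E"
proof -
  have fin: "finite V" using G by (simp add: graph_def)
  have sub: "{card Q | Q. Q \<subseteq> leaves V E \<and> separated V E 20 Q} \<subseteq> card ` Pow (leaves V E)" by auto
  have "finite (leaves V E)" using fin by (simp add: leaves_def)
  then have "finite (card ` Pow (leaves V E))" by simp
  then have "finite {card Q | Q. Q \<subseteq> leaves V E \<and> separated V E 20 Q}"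
    by (rule finite_subset[OF sub])
  moreover have "card Q \<in> {card Q | Q. Q \<subseteq> leaves V E \<and> separated V E 20 Q}" using Q by blast
  ultimately show ?thesis unfolding lam_def by (rule Max_ge)
qed

lemma leaves_bound:
  assumes T: "is_tree V E" and deg: "\<forall>v\<in>V. degree V E v \<le> D"
  shows "card (leaves V E) \<le> (D + 1) ^ 19 * lam V E"
proof -
  have G: "graph V E" using T by (simp add: is_tree_def)
  have fin: "finite V" using G by (simp add: graph_def)
  have finL: "finite (leaves V E)" using fin by (simp add: leaves_def)
  have LV: "leaves V E \<subseteq> V" by (auto simp: leaves_def)
  define good where "good Q \<longleftrightarrow> Q \<subseteq> leaves V E \<and> (\<forall>a\<in>Q. \<forall>b\<in>Q. a \<noteq> b \<longrightarrow> b \<notin> ball V E a 19)" for Q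
  have g0: "good {}" by (simp add: good_def)
  have bnd: "\<forall>Q. good Q \<longrightarrow> card Q < Suc (card V)"
  proof (intro allI impI)
    fix Q assume "good Q"
    then have "Q \<subseteq> V" using LV by (auto simp: good_def)
    then show "card Q < Suc (card V)" using card_mono[OF fin] by (simp add: less_Suc_eq_le)
  qed
  obtain Q where gQ: "good Q" and Qmax: "\<forall>Q'. good Q' \<longrightarrow> card Q' \<le> card Q"
    using Lattices_Big.ex_has_greatest_nat[of good "{}" card "Suc (card V)", OF g0 bnd] by blast
  have QL: "Q \<subseteq> leaves V E" using gQ by (simp add: good_def)
  have finQ: "finite Q" using QL finL finite_subset by blast
  have cover: "leaves V E \<subseteq> (\<Union>a\<in>Q. ball V E a 19)"
  proof
    fix l assume l: "l \<in> leaves V E"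
    show "l \<in> (\<Union>a\<in>Q. ball V E a 19)"
    proof (rule ccontr)
      assume nc: "l \<notin> (\<Union>a\<in>Q. ball V E a 19)"
      have lV: "l \<in> V" using l LV by blast
      have lQ: "l \<notin> Q" using nc ball_self[OF lV] by blast
      have "good (insert l Q)"
        unfolding good_def
      proof (intro conjI ballI impI)
        show "insert l Q \<subseteq> leaves V E" using QL l by blast
        fix a b assume a: "a \<in> insert l Q" and b: "b \<in> insert l Q" and ab: "a \<noteq> b"
        show "b \<notin> ball V E a 19"
        proof
          assume bb: "b \<in> ball V E a 19"
          consider "a = l" "b \<in> Q" | "b = l" "a \<in> Q" | "a \<in> Q" "b \<in> Q" using a b ab by blast
          then show False
          proof cases
            case 1
            then show ?thesis using ball_sym[OF G bb] nc by blast
          next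
            case 2
            then show ?thesis using bb nc by blast
          next
            case 3
            then show ?thesis using gQ bb ab by (auto simp: good_def)
          qed
        qed
      qed
      then have "card (insert l Q) \<le> card Q" using Qmax by blast
      then show False using lQ finQ by simp
    qed
  qed
  have "card (leaves V E) \<le> card (\<Union>a\<in>Q. ball V E a 19)"
    by (rule card_mono) (use cover finQ finite_subset[OF ball_sub fin] in \<open>auto\<close>)
  also have "\<dots> \<le> (\<Sum>a\<in>Q. card (ball V E a 19))" by (rule card_UN_le[OF finQ])
  also have "\<dots> \<le> (\<Sum>a\<in>Q. (D + 1) ^ 19)" by (rule sum_mono) (rule ball_card[OF G deg])
  also have "\<dots> = (D + 1) ^ 19 * card Q" by simp
  finally have 1: "card (leaves V E) \<le> (D + 1) ^ 19 * card Q" .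
  have sep: "separated V E 20 Q"
    unfolding separated_def
  proof (intro ballI impI)
    fix a b assume a: "a \<in> Q" and b: "b \<in> Q" and ab: "a \<noteq> b"
    have aV: "a \<in> V" and bV: "b \<in> V" using a b QL LV by auto
    show "20 \<le> dist V E a b"
    proof (rule ccontr)
      assume "\<not> 20 \<le> dist V E a b"
      then have d: "dist V E a b \<le> 19" by simp
      obtain p where p: "is_path V E p" "hd p = a" "last p = b" "length p = dist V E a b + 1"
        using dist_path[OF T aV bV] by blast
      have "length p \<le> Suc 19" using p(4) d by simp
      then have "b \<in> ball V E a 19" using p unfolding ball_def by blast
      then show False using gQ a b ab by (auto simp: good_def)
    qed
  qed
  have "card Q \<le> lam V E" by (rule lam_ge[OF G QL sep])
  then show ?thesis using 1 by (meson le_trans mult_le_mono2)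
qed



lemma is_path_Cons:
  assumes "is_path V E p" "y \<in> V" "y \<notin> set p" "E y (hd p)"
  shows "is_path V E (y # p)"
proof -
  have ne: "p \<noteq> []" using is_path_ne[OF assms(1)] .
  have "E ((y # p) ! i) ((y # p) ! Suc i)" if i: "Suc i < length (y # p)" for i
  proof (cases i)
    case 0
    then show ?thesis using assms(4) ne by (simp add: hd_conv_nth)
  next
    case (Suc j)
    then show ?thesis using is_path_adj[OF assms(1), of j] i by simp
  qed
  then show ?thesis using assms unfolding is_path_def by auto
qed

lemma deg2_nbrs:
  assumes fin: "finite V" and d: "degree V E z = 2" and a: "a \<in> nbrs V E z" and b: "b \<in> nbrs V E z"
    and ab: "a \<noteq> b" and c: "c \<in> nbrs V E z"
  shows "c = a \<or> c = b"
proof (rule ccontr)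
  assume "\<not> ?thesis"
  then have "card {a, b, c} = 3" using ab by simp
  moreover have "card {a, b, c} \<le> card (nbrs V E z)"
    by (rule card_mono) (use fin a b c in \<open>auto simp: nbrs_def\<close>)
  ultimately show False using d by (simp add: degree_nbrs)
qed

definition D2 :: "nat set \<Rightarrow> (nat \<Rightarrow> nat \<Rightarrow> bool) \<Rightarrow> nat set" where
  "D2 V E = {v \<in> V. degree V E v = 2}"

definition dcomp :: "nat set \<Rightarrow> (nat \<Rightarrow> nat \<Rightarrow> bool) \<Rightarrow> nat \<Rightarrow> nat set" where
  "dcomp V E x = {y. (restr E (D2 V E))\<^sup>*\<^sup>* x y}"

definition dcomps :: "nat set \<Rightarrow> (nat \<Rightarrow> nat \<Rightarrow> bool) \<Rightarrow> nat set set" where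
  "dcomps V E = dcomp V E ` D2 V E"

definition span :: "nat set \<Rightarrow> (nat \<Rightarrow> nat \<Rightarrow> bool) \<Rightarrow> nat set \<Rightarrow> nat list" where
  "span V E X = (SOME p. is_path V E p \<and> set p = X)"

definition chunk :: "nat list \<Rightarrow> nat \<Rightarrow> nat \<Rightarrow> nat list" where
  "chunk p k j = take (k + 1) (drop (j * (k + 1)) p)"

definition chunks :: "nat set \<Rightarrow> (nat \<Rightarrow> nat \<Rightarrow> bool) \<Rightarrow> nat \<Rightarrow> nat set \<Rightarrow> nat list set" where
  "chunks V E k X = chunk (span V E X) k ` {..< card X div (k + 1)}"

context
  fixes V E
  assumes T: "is_tree V E"
begin

lemma G: "graph V E" using T by (simp add: is_tree_def)
lemma fin: "finite V" using G by (simp add: graph_def)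

lemma D2_sub: "D2 V E \<subseteq> V" by (auto simp: D2_def)

lemma dcomp_sub: "x \<in> D2 V E \<Longrightarrow> dcomp V E x \<subseteq> D2 V E"
  unfolding dcomp_def using rtr_in by blast

lemma dcomp_self: "x \<in> dcomp V E x" by (simp add: dcomp_def)

lemma dcomp_eq:
  assumes x: "x \<in> D2 V E" and y: "y \<in> dcomp V E x"
  shows "dcomp V E y = dcomp V E x"
proof -
  have xy: "(restr E (D2 V E))\<^sup>*\<^sup>* x y" using y by (simp add: dcomp_def)
  have yx: "(restr E (D2 V E))\<^sup>*\<^sup>* y x" by (rule rtr_sym[OF G xy])
  show ?thesis unfolding dcomp_def
    using xy yx by (auto intro: rtranclp_trans)
qed

lemma dcomps_eq: "X \<in> dcomps V E \<Longrightarrow> y \<in> X \<Longrightarrow> X = dcomp V E y"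
  unfolding dcomps_def using dcomp_eq by auto

lemma dcomps_sub: "X \<in> dcomps V E \<Longrightarrow> X \<subseteq> D2 V E"
  unfolding dcomps_def using dcomp_sub by auto

lemma dcomps_disj: "X \<in> dcomps V E \<Longrightarrow> Y \<in> dcomps V E \<Longrightarrow> X \<noteq> Y \<Longrightarrow> X \<inter> Y = {}"
  using dcomps_eq by blast

lemma dcomps_ne: "X \<in> dcomps V E \<Longrightarrow> X \<noteq> {}"
  unfolding dcomps_def using dcomp_self by auto

lemma dcomps_Union: "\<Union>(dcomps V E) = D2 V E"
  unfolding dcomps_def using dcomp_sub dcomp_self by blast

lemma dcomps_fin: "finite (dcomps V E)"
proof -
  have "finite (D2 V E)" using finite_subset[OF D2_sub fin] .
  then show ?thesis unfolding dcomps_def by simp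
qed

lemma dcomps_finX: "X \<in> dcomps V E \<Longrightarrow> finite X"
  using dcomps_sub finite_subset[OF D2_sub fin] finite_subset by blast

lemma span_exists:
  assumes X: "X \<in> dcomps V E"
  shows "\<exists>p. is_path V E p \<and> set p = X"
proof -
  obtain x where x: "x \<in> D2 V E" and Xx: "X = dcomp V E x" using X by (auto simp: dcomps_def)
  have xV: "x \<in> V" using x by (simp add: D2_def)
  have XD: "X \<subseteq> D2 V E" using dcomp_sub[OF x] Xx by simp
  define Q where "Q p \<longleftrightarrow> x \<in> set p \<and> set p \<subseteq> X" for p
  have q0: "is_path V E [x]" "Q [x]" using xV dcomp_self[of x] Xx by (auto simp: Q_def)
  obtain p where p: "is_path V E p" "Q p" and pmax: "\<forall>q. is_path V E q \<and> Q q \<longrightarrow> length q \<le> length p"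
    using max_path_exists[of V E "[x]" Q, OF fin q0] by blast
  have ne: "p \<noteq> []" using is_path_ne[OF p(1)] .
  have pX: "set p \<subseteq> X" and xp: "x \<in> set p" using p(2) by (auto simp: Q_def)
  have closed: "y \<in> set p" if zp: "z \<in> set p" and zy: "restr E (D2 V E) z y" and yX: "y \<in> X" for z y
  proof (rule ccontr)
    assume yp: "y \<notin> set p"
    have Ezy: "E z y" and yD: "y \<in> D2 V E" using zy by (auto simp: restr_def)
    have yV: "y \<in> V" using yD by (simp add: D2_def)
    have Eyz: "E y z" using graph_sym[OF G Ezy] .
    obtain i where i: "i < length p" "p ! i = z" using zp by (auto simp: in_set_conv_nth)
    consider "i = length p - 1" | "i = 0" "i \<noteq> length p - 1" | "0 < i" "i < length p - 1" using i by linarith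
    then show False
    proof cases
      case 1
      then have "last p = z" using i ne by (simp add: last_conv_nth)
      then have "is_path V E (p @ [y])" using is_path_append1[OF p(1) yV yp] Ezy by simp
      moreover have "Q (p @ [y])" using pX xp yX by (auto simp: Q_def)
      ultimately show False using pmax by fastforce
    next
      case 2
      then have "hd p = z" using i ne by (simp add: hd_conv_nth)
      then have "is_path V E (y # p)" using is_path_Cons[OF p(1) yV yp] Eyz by simp
      moreover have "Q (y # p)" using pX xp yX by (auto simp: Q_def)
      ultimately show False using pmax by fastforce
    next
      case 3
      have a: "E (p ! (i - 1)) z" using is_path_adj[OF p(1), of "i - 1"] 3 i by simp
      have b: "E z (p ! Suc i)" using is_path_adj[OF p(1), of i] 3 i by simp
      have zD: "z \<in> D2 V E" using zy by (simp add: restr_def)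
      have an: "p ! (i - 1) \<in> nbrs V E z" using graph_in[OF G a] graph_sym[OF G a] by (simp add: nbrs_def)
      have bn: "p ! Suc i \<in> nbrs V E z" using graph_in[OF G b] b by (simp add: nbrs_def)
      have yn: "y \<in> nbrs V E z" using yV Ezy by (simp add: nbrs_def)
      have dist: "distinct p" using p(1) by (simp add: is_path_def)
      have abne: "p ! (i - 1) \<noteq> p ! Suc i" using dist 3 by (simp add: nth_eq_iff_index_eq)
      have "y \<noteq> p ! (i - 1)" "y \<noteq> p ! Suc i" using yp 3 by (auto)
      moreover have "degree V E z = 2" using zD by (simp add: D2_def)
      ultimately show False using deg2_nbrs[OF fin _ an bn abne yn] by blast
    qed
  qed
  have "y \<in> set p" if "(restr E (D2 V E))\<^sup>*\<^sup>* x y" for y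
    using that
  proof (induction rule: rtranclp_induct)
    case base
    then show ?case using xp .
  next
    case (step y z)
    have "z \<in> X" using step(1,2) Xx by (simp add: dcomp_def)
    then show ?case using closed[OF step(3) step(2)] by blast
  qed
  then have "X \<subseteq> set p" using Xx by (auto simp: dcomp_def)
  then have "set p = X" using pX by blast
  then show ?thesis using p(1) by blast
qed

lemma span_prop:
  assumes "X \<in> dcomps V E"
  shows "is_path V E (span V E X)" "set (span V E X) = X" "length (span V E X) = card X"
proof -
  have "is_path V E (span V E X) \<and> set (span V E X) = X"
    unfolding span_def by (rule someI_ex[OF span_exists[OF assms]])
  then show "is_path V E (span V E X)" "set (span V E X) = X" by auto
  then show "length (span V E X) = card X"
    by (metis distinct_card is_path_def)
qed

end



lemma chunk_len: "(j + 1) * (k + 1) \<le> length p \<Longrightarrow> length (chunk p k j) = k + 1"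
  by (simp add: chunk_def algebra_simps)

lemma chunk_set: "set (chunk p k j) \<subseteq> set p"
  unfolding chunk_def by (meson in_set_dropD in_set_takeD subsetI)

lemma chunk_path:
  assumes "is_path V E p" "(j + 1) * (k + 1) \<le> length p"
  shows "is_path V E (chunk p k j)"
proof -
  have "j * (k + 1) < length p" using assms(2) by (simp add: algebra_simps)
  then have "is_path V E (drop (j * (k + 1)) p)" by (rule is_path_drop[OF assms(1)])
  then show ?thesis unfolding chunk_def by (rule is_path_take) simp
qed

lemma chunk_mem:
  assumes "x \<in> set (chunk p k j)"
  shows "\<exists>a. j * (k + 1) \<le> a \<and> a < (j + 1) * (k + 1) \<and> a < length p \<and> x = p ! a"
proof -
  obtain i where i: "i < length (chunk p k j)" "chunk p k j ! i = x"
    using assms by (auto simp: in_set_conv_nth)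
  have ik: "i < k + 1" and il: "i < length p - j * (k + 1)" using i(1) by (auto simp: chunk_def)
  have "x = p ! (j * (k + 1) + i)" using i ik il by (simp add: chunk_def)
  moreover have "j * (k + 1) + i < (j + 1) * (k + 1)" using ik by (simp add: algebra_simps)
  ultimately show ?thesis using il by (intro exI[of _ "j * (k + 1) + i"]) auto
qed

lemma chunk_disj:
  assumes d: "distinct p" and jj: "j \<noteq> j'"
  shows "set (chunk p k j) \<inter> set (chunk p k j') = {}"
proof (rule ccontr)
  assume "\<not> ?thesis"
  then obtain x where x: "x \<in> set (chunk p k j)" "x \<in> set (chunk p k j')" by blast
  obtain a where a: "j * (k + 1) \<le> a" "a < (j + 1) * (k + 1)" "a < length p" "x = p ! a"
    using chunk_mem[OF x(1)] by blast
  obtain a' where a': "j' * (k + 1) \<le> a'" "a' < (j' + 1) * (k + 1)" "a' < length p" "x = p ! a'"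
    using chunk_mem[OF x(2)] by blast
  have "a = a'" using d a a' by (simp add: nth_eq_iff_index_eq)
  have "a div (k + 1) = j" by (rule div_nat_eqI) (use a in \<open>auto simp: algebra_simps\<close>)
  moreover have "a' div (k + 1) = j'" by (rule div_nat_eqI) (use a' in \<open>auto simp: algebra_simps\<close>)
  ultimately show False using \<open>a = a'\<close> jj by simp
qed

lemma chunk_ne: "(j + 1) * (k + 1) \<le> length p \<Longrightarrow> chunk p k j \<noteq> []"
  using chunk_len[of j k p] by auto

definition Pall :: "nat set \<Rightarrow> (nat \<Rightarrow> nat \<Rightarrow> bool) \<Rightarrow> nat \<Rightarrow> nat list set" where
  "Pall V E k = \<Union>(chunks V E k ` dcomps V E)"

context
  fixes V E
  assumes T: "is_tree V E"
begin

lemma chunks_props: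
  assumes X: "X \<in> dcomps V E" and q: "q \<in> chunks V E k X"
  shows "bare_path V E q" "length q = k + 1" "set q \<subseteq> X"
proof -
  obtain j where j: "j < card X div (k + 1)" and qj: "q = chunk (span V E X) k j"
    using q by (auto simp: chunks_def)
  have lsp: "length (span V E X) = card X" using span_prop[OF T X] by simp
  have jl: "(j + 1) * (k + 1) \<le> length (span V E X)"
  proof -
    have "(j + 1) \<le> card X div (k + 1)" using j by simp
    then have "(j + 1) * (k + 1) \<le> card X div (k + 1) * (k + 1)" by (rule mult_right_mono) simp
    also have "\<dots> \<le> card X" using div_mult_mod_eq[of "card X" "k + 1"] by linarith
    finally show ?thesis using lsp by simp
  qed
  show "length q = k + 1" using chunk_len[OF jl] qj by simp
  show sq: "set q \<subseteq> X" using chunk_set[of "span V E X" k j] span_prop(2)[OF T X] qj by simp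
  have "is_path V E q" using chunk_path[OF span_prop(1)[OF T X] jl] qj by simp
  moreover have "\<forall>x\<in>set q. degree V E x = 2" using sq dcomps_sub[OF T X] by (auto simp: D2_def)
  ultimately show "bare_path V E q" unfolding bare_path_def by (auto)
qed

lemma chunks_card:
  assumes X: "X \<in> dcomps V E"
  shows "card (chunks V E k X) = card X div (k + 1)"
proof -
  let ?p = "span V E X"
  have lsp: "length ?p = card X" using span_prop[OF T X] by simp
  have d: "distinct ?p" using span_prop(1)[OF T X] by (simp add: is_path_def)
  have "inj_on (chunk ?p k) {..< card X div (k + 1)}"
  proof (rule inj_onI)
    fix j j' assume j: "j \<in> {..< card X div (k + 1)}" and j': "j' \<in> {..< card X div (k + 1)}"
      and eq: "chunk ?p k j = chunk ?p k j'"
    have jl: "(j + 1) * (k + 1) \<le> length ?p"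
    proof -
      have "(j + 1) \<le> card X div (k + 1)" using j by simp
      then have "(j + 1) * (k + 1) \<le> card X div (k + 1) * (k + 1)" by (rule mult_right_mono) simp
      also have "\<dots> \<le> card X" using div_mult_mod_eq[of "card X" "k + 1"] by linarith
      finally show ?thesis using lsp by simp
    qed
    show "j = j'"
    proof (rule ccontr)
      assume "j \<noteq> j'"
      then have "set (chunk ?p k j) \<inter> set (chunk ?p k j') = {}" by (rule chunk_disj[OF d])
      then show False using eq chunk_ne[OF jl] by simp
    qed
  qed
  then show ?thesis unfolding chunks_def by (simp add: card_image)
qed

lemma chunks_disj_same:
  assumes X: "X \<in> dcomps V E" and q: "q \<in> chunks V E k X" and q': "q' \<in> chunks V E k X" and qq: "q \<noteq> q'"
  shows "set q \<inter> set q' = {}"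
proof -
  obtain j where qj: "q = chunk (span V E X) k j" using q by (auto simp: chunks_def)
  obtain j' where qj': "q' = chunk (span V E X) k j'" using q' by (auto simp: chunks_def)
  have d: "distinct (span V E X)" using span_prop(1)[OF T X] by (simp add: is_path_def)
  have "j \<noteq> j'" using qq qj qj' by auto
  then show ?thesis using chunk_disj[OF d] qj qj' by simp
qed

lemma Pall_props:
  shows "finite (Pall V E k)"
    and "\<forall>p\<in>Pall V E k. bare_path V E p \<and> length p = k + 1"
    and "\<forall>p\<in>Pall V E k. \<forall>q\<in>Pall V E k. p \<noteq> q \<longrightarrow> set p \<inter> set q = {}"
    and "card (Pall V E k) = (\<Sum>X\<in>dcomps V E. card X div (k + 1))"
proof -
  have finc: "finite (chunks V E k X)" for X by (simp add: chunks_def)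
  show "finite (Pall V E k)" unfolding Pall_def using dcomps_fin[OF T] finc by simp
  show "\<forall>p\<in>Pall V E k. bare_path V E p \<and> length p = k + 1"
    unfolding Pall_def using chunks_props by blast
  have cross: "set p \<inter> set q = {}" if X: "X \<in> dcomps V E" and Y: "Y \<in> dcomps V E" and XY: "X \<noteq> Y"
    and p: "p \<in> chunks V E k X" and q: "q \<in> chunks V E k Y" for X Y p q
  proof -
    have "set p \<subseteq> X" "set q \<subseteq> Y" using chunks_props(3) X Y p q by auto
    moreover have "X \<inter> Y = {}" using dcomps_disj[OF T X Y XY] .
    ultimately show ?thesis by blast
  qed
  show "\<forall>p\<in>Pall V E k. \<forall>q\<in>Pall V E k. p \<noteq> q \<longrightarrow> set p \<inter> set q = {}"
  proof (intro ballI impI)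
    fix p q assume p: "p \<in> Pall V E k" and q: "q \<in> Pall V E k" and pq: "p \<noteq> q"
    obtain X where X: "X \<in> dcomps V E" "p \<in> chunks V E k X" using p by (auto simp: Pall_def)
    obtain Y where Y: "Y \<in> dcomps V E" "q \<in> chunks V E k Y" using q by (auto simp: Pall_def)
    show "set p \<inter> set q = {}"
    proof (cases "X = Y")
      case True
      then show ?thesis using chunks_disj_same[OF X(1) X(2)] Y pq by simp
    next
      case False
      show ?thesis using cross[OF X(1) Y(1) False X(2) Y(2)] .
    qed
  qed
  have disj: "chunks V E k X \<inter> chunks V E k Y = {}" if X: "X \<in> dcomps V E" and Y: "Y \<in> dcomps V E" and XY: "X \<noteq> Y" for X Y
  proof (rule ccontr)
    assume "\<not> ?thesis"
    then obtain p where p: "p \<in> chunks V E k X" "p \<in> chunks V E k Y" by blast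
    have "set p \<inter> set p = {}" using cross[OF X Y XY p] .
    moreover have "length p = k + 1" using chunks_props(2)[OF X p(1)] .
    ultimately show False by simp
  qed
  have "card (Pall V E k) = (\<Sum>X\<in>dcomps V E. card (chunks V E k X))"
    unfolding Pall_def by (rule card_UN_disjoint) (use dcomps_fin[OF T] finc disj in auto)
  also have "\<dots> = (\<Sum>X\<in>dcomps V E. card X div (k + 1))"
    by (rule sum.cong) (simp_all add: chunks_card)
  finally show "card (Pall V E k) = (\<Sum>X\<in>dcomps V E. card X div (k + 1))" .
qed

lemma dcomps_count:
  assumes deg: "\<forall>v\<in>V. degree V E v \<le> D" and c2: "card V \<ge> 2"
  shows "card (dcomps V E) \<le> D * card (V - D2 V E)"
proof -
  let ?N = "V - D2 V E"
  let ?S = "Sigma ?N (nbrs V E)"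
  obtain l w where lV: "l \<in> V" and l: "nbrs V E l = {w}" using leaf_exists[OF T c2] by blast
  have lN: "l \<in> ?N" using lV l by (simp add: D2_def degree_nbrs)
  have ex: "\<exists>e. e \<in> ?S \<and> snd e \<in> X" if X: "X \<in> dcomps V E" for X
  proof -
    obtain x where x: "x \<in> D2 V E" and Xx: "X = dcomp V E x" using X by (auto simp: dcomps_def)
    have xV: "x \<in> V" using x by (simp add: D2_def)
    obtain p where p: "is_path V E p" "hd p = x" "last p = l" using tree_conn[OF T xV lV] by blast
    have ne: "p \<noteq> []" using is_path_ne[OF p(1)] .
    define P where "P j \<longleftrightarrow> j < length p \<and> p ! j \<notin> D2 V E" for j
    have "P (length p - 1)" using ne p(3) lN by (simp add: P_def last_conv_nth)
    then have Pj: "P (LEAST j. P j)" by (rule LeastI)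
    define j where "j = (LEAST j. P j)"
    have jl: "j < length p" and jN: "p ! j \<notin> D2 V E" using Pj by (auto simp: P_def j_def)
    have before: "p ! i \<in> D2 V E" if "i < j" for i
      using not_less_Least[OF that[unfolded j_def]] that jl by (auto simp: P_def j_def)
    have j0: "j \<noteq> 0"
    proof
      assume "j = 0"
      then have "p ! j = x" using p(2) ne by (simp add: hd_conv_nth)
      then show False using jN x by simp
    qed
    define q where "q = take j p"
    have qp: "is_path V E q" unfolding q_def by (rule is_path_take[OF p(1)]) (use j0 in simp)
    have qD: "set q \<subseteq> D2 V E"
    proof
      fix y assume "y \<in> set q"
      then obtain i where "i < length q" "q ! i = y" by (auto simp: in_set_conv_nth)
      then show "y \<in> D2 V E" using before jl by (auto simp: q_def)
    qed
    have qD': "is_path (D2 V E) E q" by (rule is_path_mono[OF qp qD])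
    have "(restr E (D2 V E))\<^sup>*\<^sup>* (hd q) (q ! (j - 1))"
      by (rule path_rtr[OF qD']) (use jl j0 in \<open>simp add: q_def\<close>)
    moreover have "hd q = x" using p(2) j0 ne by (simp add: q_def)
    moreover have "q ! (j - 1) = p ! (j - 1)" using j0 by (simp add: q_def)
    ultimately have inX: "p ! (j - 1) \<in> X" using Xx by (simp add: dcomp_def)
    have "E (p ! (j - 1)) (p ! j)" using is_path_adj[OF p(1), of "j - 1"] j0 jl by simp
    then have Ee: "E (p ! j) (p ! (j - 1))" using graph_sym[OF G[OF T]] by blast
    have "p ! j \<in> V" "p ! (j - 1) \<in> V" using is_path_nth_in[OF p(1)] jl by auto
    then have "(p ! j, p ! (j - 1)) \<in> ?S" using jN Ee by (simp add: nbrs_def)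
    then show ?thesis using inX by (intro exI[of _ "(p ! j, p ! (j - 1))"]) simp
  qed
  define f where "f X = (SOME e. e \<in> ?S \<and> snd e \<in> X)" for X
  have f: "f X \<in> ?S \<and> snd (f X) \<in> X" if "X \<in> dcomps V E" for X
    unfolding f_def by (rule someI_ex[OF ex[OF that]])
  have "inj_on f (dcomps V E)"
  proof (rule inj_onI)
    fix X Y assume X: "X \<in> dcomps V E" and Y: "Y \<in> dcomps V E" and eq: "f X = f Y"
    have "snd (f X) \<in> X \<inter> Y" using f[OF X] f[OF Y] eq by simp
    then show "X = Y" using dcomps_disj[OF T X Y] by blast
  qed
  moreover have "f ` dcomps V E \<subseteq> ?S" using f by blast
  moreover have finS: "finite ?S" using fin[OF T] by (auto simp: nbrs_def)
  ultimately have "card (dcomps V E) \<le> card ?S" by (metis card_inj_on_le)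
  also have "card ?S = (\<Sum>b\<in>?N. card (nbrs V E b))"
    by (rule card_SigmaI) (use fin[OF T] in \<open>auto simp: nbrs_def\<close>)
  also have "\<dots> \<le> (\<Sum>b\<in>?N. D)" by (rule sum_mono) (use deg in \<open>auto simp: degree_nbrs\<close>)
  also have "\<dots> = D * card ?N" by simp
  finally show ?thesis .
qed

end



definition LX :: "nat set \<Rightarrow> (nat \<Rightarrow> nat \<Rightarrow> bool) \<Rightarrow> nat set set" where
  "LX V E = {X \<in> dcomps V E. 41 \<le> card X}"

definition mid :: "nat set \<Rightarrow> (nat \<Rightarrow> nat \<Rightarrow> bool) \<Rightarrow> nat set \<Rightarrow> nat" where
  "mid V E X = span V E X ! 20"

definition Mset :: "nat set \<Rightarrow> (nat \<Rightarrow> nat \<Rightarrow> bool) \<Rightarrow> nat set" where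
  "Mset V E = mid V E ` LX V E"

lemma forward:
  assumes G: "graph V E" and fin: "finite V"
    and r: "is_path V E r" and rd: "\<forall>x\<in>set r. degree V E x = 2"
    and p: "is_path V E p" and pl: "degree V E (last p) \<noteq> 2"
    and i: "i < length p" "p ! i = r ! s" and i1: "Suc i < length p" "p ! Suc i = r ! Suc s"
  shows "s + j < length r \<Longrightarrow> i + j < length p \<and> p ! (i + j) = r ! (s + j)"
proof -
  have ne: "p \<noteq> []" using is_path_ne[OF p] .
  have dp: "distinct p" using p by (simp add: is_path_def)
  have "\<forall>j. (s + j < length r \<longrightarrow> i + j < length p \<and> p ! (i + j) = r ! (s + j)) \<and>
             (s + Suc j < length r \<longrightarrow> i + Suc j < length p \<and> p ! (i + Suc j) = r ! (s + Suc j))"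
  proof (intro allI)
    fix j show "(s + j < length r \<longrightarrow> i + j < length p \<and> p ! (i + j) = r ! (s + j)) \<and>
             (s + Suc j < length r \<longrightarrow> i + Suc j < length p \<and> p ! (i + Suc j) = r ! (s + Suc j))"
    proof (induction j)
      case 0
      then show ?case using i i1 by simp
    next
      case (Suc j)
      have A: "s + Suc j < length r \<longrightarrow> i + Suc j < length p \<and> p ! (i + Suc j) = r ! (s + Suc j)"
        using Suc.IH by blast
      have B: "i + Suc (Suc j) < length p \<and> p ! (i + Suc (Suc j)) = r ! (s + Suc (Suc j))"
        if sl: "s + Suc (Suc j) < length r"
      proof -
        have h1: "i + Suc j < length p" "p ! (i + Suc j) = r ! (s + Suc j)" using A sl by auto
        have h0: "p ! (i + j) = r ! (s + j)" using Suc.IH sl by auto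
        define z where "z = r ! (s + Suc j)"
        have zd: "degree V E z = 2" using rd sl by (simp add: z_def)
        have nl: "i + Suc j \<noteq> length p - 1"
        proof
          assume "i + Suc j = length p - 1"
          then have "last p = z" using h1 ne by (simp add: last_conv_nth z_def)
          then show False using pl zd by simp
        qed
        then have l2: "i + Suc (Suc j) < length p" using h1 by simp
        have e1: "E z (p ! (i + Suc (Suc j)))" using is_path_adj[OF p, of "i + Suc j"] l2 h1 by (simp add: z_def)
        have e2: "E (r ! (s + j)) z" using is_path_adj[OF r, of "s + j"] sl by (simp add: z_def)
        have e3: "E z (r ! (s + Suc (Suc j)))" using is_path_adj[OF r, of "s + Suc j"] sl by (simp add: z_def)
        have n1: "p ! (i + Suc (Suc j)) \<in> nbrs V E z" using e1 graph_in[OF G e1] by (simp add: nbrs_def)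
        have n2: "r ! (s + j) \<in> nbrs V E z" using graph_sym[OF G e2] graph_in[OF G e2] by (simp add: nbrs_def)
        have n3: "r ! (s + Suc (Suc j)) \<in> nbrs V E z" using e3 graph_in[OF G e3] by (simp add: nbrs_def)
        have dr: "distinct r" using r by (simp add: is_path_def)
        have ne23: "r ! (s + j) \<noteq> r ! (s + Suc (Suc j))" using dr sl by (simp add: nth_eq_iff_index_eq)
        have ne1: "p ! (i + Suc (Suc j)) \<noteq> p ! (i + j)" using dp l2 by (simp add: nth_eq_iff_index_eq)
        have "p ! (i + Suc (Suc j)) = r ! (s + j) \<or> p ! (i + Suc (Suc j)) = r ! (s + Suc (Suc j))"
          by (rule deg2_nbrs[OF fin zd n2 n3 ne23 n1])
        then show ?thesis using ne1 h0 l2 by auto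
      qed
      show ?case using A B by blast
    qed
  qed
  then show "s + j < length r \<Longrightarrow> i + j < length p \<and> p ! (i + j) = r ! (s + j)" by blast
qed

context
  fixes V E
  assumes T: "is_tree V E" and c2: "card V \<ge> 2"
begin

lemma GG: "graph V E" using T by (simp add: is_tree_def)
lemma finV: "finite V" using GG by (simp add: graph_def)

lemma deg_pos: assumes v: "v \<in> V" shows "degree V E v \<ge> 1"
proof -
  have "card (V - {v}) > 0" using c2 v finV by simp
  then obtain u where u: "u \<in> V" "u \<noteq> v" by (metis DiffD1 DiffD2 card_gt_0_iff ex_in_conv singletonI)
  obtain p where p: "is_path V E p" "hd p = v" "last p = u" using tree_conn[OF T v u(1)] by blast
  have ne: "p \<noteq> []" using is_path_ne[OF p(1)] .
  have "length p \<noteq> 1"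
  proof
    assume "length p = 1"
    then have "last p = hd p" using ne by (simp add: last_conv_nth hd_conv_nth)
    then show False using p u by simp
  qed
  then have l2: "1 < length p" using ne by (cases p) auto
  have "E (p ! 0) (p ! 1)" using is_path_adj[OF p(1), of 0] l2 by simp
  then have "E v (p ! 1)" using p(2) ne by (simp add: hd_conv_nth)
  then have "p ! 1 \<in> nbrs V E v" using graph_in[OF GG] by (simp add: nbrs_def)
  moreover have "finite (nbrs V E v)" using finV by (simp add: nbrs_def)
  ultimately have "card (nbrs V E v) > 0" using card_gt_0_iff by blast
  then show ?thesis by (simp add: degree_nbrs)
qed

lemma LX_sub: "LX V E \<subseteq> dcomps V E" by (auto simp: LX_def)

lemma mid_in: assumes X: "X \<in> LX V E" shows "mid V E X \<in> X"
proof -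
  have Xd: "X \<in> dcomps V E" and c: "41 \<le> card X" using X by (auto simp: LX_def)
  have "span V E X ! 20 \<in> set (span V E X)" using span_prop(3)[OF T Xd] c by simp
  then show ?thesis using span_prop(2)[OF T Xd] by (simp add: mid_def)
qed

lemma M_D2: "m \<in> Mset V E \<Longrightarrow> m \<in> D2 V E"
  unfolding Mset_def using mid_in dcomps_sub[OF T] LX_sub by blast

lemma M_V: "m \<in> Mset V E \<Longrightarrow> m \<in> V"
  using M_D2 by (simp add: D2_def)

lemma mid_inj: "inj_on (mid V E) (LX V E)"
proof (rule inj_onI)
  fix X Y assume X: "X \<in> LX V E" and Y: "Y \<in> LX V E" and eq: "mid V E X = mid V E Y"
  have "mid V E X \<in> X \<inter> Y" using mid_in[OF X] mid_in[OF Y] eq by simp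
  then show "X = Y" using dcomps_disj[OF T] X Y LX_sub by blast
qed

lemma card_M: "card (Mset V E) = card (LX V E)"
  unfolding Mset_def using mid_inj by (simp add: card_image)

lemma M_same:
  assumes m: "m \<in> Mset V E" and m': "m' \<in> Mset V E" and r: "(restr E (D2 V E))\<^sup>*\<^sup>* m m'"
  shows "m = m'"
proof -
  obtain X where X: "X \<in> LX V E" "m = mid V E X" using m by (auto simp: Mset_def)
  obtain Y where Y: "Y \<in> LX V E" "m' = mid V E Y" using m' by (auto simp: Mset_def)
  have Xd: "X \<in> dcomps V E" and Yd: "Y \<in> dcomps V E" using X Y LX_sub by auto
  have "X = dcomp V E m" using dcomps_eq[OF T Xd] mid_in[OF X(1)] X(2) by simp
  then have "m' \<in> X" using r by (simp add: dcomp_def)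
  then have "m' \<in> X \<inter> Y" using mid_in[OF Y(1)] Y(2) by simp
  then have "X = Y" using dcomps_disj[OF T Xd Yd] by blast
  then show ?thesis using X Y by simp
qed

lemma M_indep:
  assumes m: "m \<in> Mset V E" and m': "m' \<in> Mset V E" shows "\<not> E m m'"
proof
  assume e: "E m m'"
  have "restr E (D2 V E) m m'" using e M_D2[OF m] M_D2[OF m'] by (simp add: restr_def)
  then have "m = m'" using M_same[OF m m'] by blast
  then show False using graph_in[OF GG e] by simp
qed

lemma M_deg: "m \<in> Mset V E \<Longrightarrow> degree V E m = 2"
  using M_D2 by (simp add: D2_def)

lemma run_long:
  assumes m: "m \<in> Mset V E" and p: "is_path V E p" and i: "i < length p" "p ! i = m"
    and pl: "degree V E (last p) = 1"
  shows "i + 20 < length p"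
proof -
  obtain X where X: "X \<in> LX V E" and mX: "m = mid V E X" using m by (auto simp: Mset_def)
  have Xd: "X \<in> dcomps V E" and c: "41 \<le> card X" using X by (auto simp: LX_def)
  define r where "r = span V E X"
  have rp: "is_path V E r" and rs: "set r = X" and rl: "length r = card X"
    using span_prop[OF T Xd] by (auto simp: r_def)
  have rd: "\<forall>x\<in>set r. degree V E x = 2" using rs dcomps_sub[OF T Xd] by (auto simp: D2_def)
  have mr: "m = r ! 20" using mX by (simp add: mid_def r_def)
  have ne: "p \<noteq> []" using is_path_ne[OF p] .
  have md: "degree V E m = 2" using M_deg[OF m] .
  have i1: "Suc i < length p"
  proof (rule ccontr)
    assume "\<not> ?thesis"
    then have "i = length p - 1" using i by simp
    then have "last p = m" using i ne by (simp add: last_conv_nth)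
    then show False using pl md by simp
  qed
  have pl2: "degree V E (last p) \<noteq> 2" using pl by simp
  have e: "E m (p ! Suc i)" using is_path_adj[OF p, of i] i1 i by simp
  have n1: "p ! Suc i \<in> nbrs V E m" using e graph_in[OF GG e] by (simp add: nbrs_def)
  have e19: "E (r ! 19) m" using is_path_adj[OF rp, of 19] c rl mr by simp
  have e21: "E m (r ! 21)" using is_path_adj[OF rp, of 20] c rl mr by simp
  have n19: "r ! 19 \<in> nbrs V E m" using graph_sym[OF GG e19] graph_in[OF GG e19] by (simp add: nbrs_def)
  have n21: "r ! 21 \<in> nbrs V E m" using e21 graph_in[OF GG e21] by (simp add: nbrs_def)
  have dr: "distinct r" using rp by (simp add: is_path_def)
  have ne2: "r ! 19 \<noteq> r ! 21" using dr c rl by (simp add: nth_eq_iff_index_eq)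
  have cases: "p ! Suc i = r ! 19 \<or> p ! Suc i = r ! 21"
    by (rule deg2_nbrs[OF finV md n19 n21 ne2 n1])
  then show ?thesis
  proof
    assume h: "p ! Suc i = r ! 21"
    have "20 + 20 < length r \<Longrightarrow> i + 20 < length p \<and> p ! (i + 20) = r ! (20 + 20)"
      by (rule forward[OF GG finV rp rd p pl2 i(1) _ i1]) (use i mr h in auto)
    then show ?thesis using c rl by simp
  next
    assume h: "p ! Suc i = r ! 19"
    define r' where "r' = rev r"
    define s where "s = length r - 21"
    have rp': "is_path V E r'" using is_path_rev[OF GG rp] by (simp add: r'_def)
    have rd': "\<forall>x\<in>set r'. degree V E x = 2" using rd by (simp add: r'_def)
    have a: "r' ! s = r ! 20" using c rl by (simp add: r'_def s_def rev_nth)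
    have "card X - Suc (Suc (card X - 21)) = 19" using c by simp
    then have b: "r' ! Suc s = r ! 19" using c rl by (simp add: r'_def s_def rev_nth)
    have "s + 20 < length r' \<Longrightarrow> i + 20 < length p \<and> p ! (i + 20) = r' ! (s + 20)"
      by (rule forward[OF GG finV rp' rd' p pl2 i(1) _ i1]) (use i mr h a b in auto)
    then show ?thesis using c rl by (simp add: s_def r'_def)
  qed
qed

end



definition fcomp :: "nat set \<Rightarrow> (nat \<Rightarrow> nat \<Rightarrow> bool) \<Rightarrow> nat \<Rightarrow> nat set" where
  "fcomp V E x = {y. (restr E (V - Mset V E))\<^sup>*\<^sup>* x y}"

definition fcomps :: "nat set \<Rightarrow> (nat \<Rightarrow> nat \<Rightarrow> bool) \<Rightarrow> nat set set" where
  "fcomps V E = fcomp V E ` (V - Mset V E)"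

definition exits :: "nat set \<Rightarrow> (nat \<Rightarrow> nat \<Rightarrow> bool) \<Rightarrow> nat set \<Rightarrow> nat" where
  "exits V E C = (\<Sum>v\<in>C. card (nbrs V E v \<inter> Mset V E))"

context
  fixes V E
  assumes T: "is_tree V E" and c2: "card V \<ge> 2"
begin

abbreviation "W \<equiv> V - Mset V E"
abbreviation "M \<equiv> Mset V E"

lemma fc_sub: "x \<in> W \<Longrightarrow> fcomp V E x \<subseteq> W"
  unfolding fcomp_def using rtr_in by blast

lemma fc_self: "x \<in> fcomp V E x" by (simp add: fcomp_def)

lemma fc_eq:
  assumes x: "x \<in> W" and y: "y \<in> fcomp V E x"
  shows "fcomp V E y = fcomp V E x"
proof -
  have xy: "(restr E W)\<^sup>*\<^sup>* x y" using y by (simp add: fcomp_def)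
  have yx: "(restr E W)\<^sup>*\<^sup>* y x" by (rule rtr_sym[OF GG[OF T c2] xy])
  show ?thesis unfolding fcomp_def
    using xy yx by (auto intro: rtranclp_trans)
qed

lemma fcs_eq: "C \<in> fcomps V E \<Longrightarrow> y \<in> C \<Longrightarrow> C = fcomp V E y"
  unfolding fcomps_def using fc_eq by auto

lemma fcs_sub: "C \<in> fcomps V E \<Longrightarrow> C \<subseteq> W"
  unfolding fcomps_def using fc_sub by auto

lemma fcs_disj: "C \<in> fcomps V E \<Longrightarrow> D \<in> fcomps V E \<Longrightarrow> C \<noteq> D \<Longrightarrow> C \<inter> D = {}"
  using fcs_eq by blast

lemma fcs_ne: "C \<in> fcomps V E \<Longrightarrow> C \<noteq> {}"
  unfolding fcomps_def using fc_self by auto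

lemma fcs_Union: "\<Union>(fcomps V E) = W"
  unfolding fcomps_def using fc_sub fc_self by blast

lemma fcs_fin: "finite (fcomps V E)"
  unfolding fcomps_def using finV[OF T c2] by simp

lemma fcs_finC: "C \<in> fcomps V E \<Longrightarrow> finite C"
proof -
  assume "C \<in> fcomps V E"
  then have "C \<subseteq> V" using fcs_sub by blast
  then show "finite C" using finite_subset finV[OF T c2] by auto
qed

lemma fcs_tree:
  assumes C: "C \<in> fcomps V E"
  shows "is_tree C (restr E C)"
proof (rule tree_restr[OF T])
  show "C \<subseteq> V" using fcs_sub[OF C] by blast
  show "C \<noteq> {}" using fcs_ne[OF C] .
  fix u v assume u: "u \<in> C" and v: "v \<in> C"
  have Cu: "C = fcomp V E u" using fcs_eq[OF C u] .
  have uW: "u \<in> W" using u fcs_sub[OF C] by blast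
  have "(restr E W)\<^sup>*\<^sup>* u v" using v Cu by (simp add: fcomp_def)
  then obtain q where q: "is_path W E q" "hd q = u" "last q = v" using rtr_path uW by blast
  have "set q \<subseteq> C"
  proof
    fix y assume "y \<in> set q"
    then obtain i where i: "i < length q" "q ! i = y" by (auto simp: in_set_conv_nth)
    have "(restr E W)\<^sup>*\<^sup>* (hd q) (q ! i)" by (rule path_rtr[OF q(1) i(1)])
    then show "y \<in> C" using Cu q(2) i(2) by (simp add: fcomp_def)
  qed
  then have "is_path C E q" by (rule is_path_mono[OF q(1)])
  then show "\<exists>p. is_path C E p \<and> hd p = u \<and> last p = v" using q by blast
qed

lemma deg_split:
  assumes C: "C \<in> fcomps V E" and v: "v \<in> C"
  shows "degree V E v = degree C (restr E C) v + card (nbrs V E v \<inter> M)"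
proof -
  have Cv: "C = fcomp V E v" using fcs_eq[OF C v] .
  have vW: "v \<in> W" using v fcs_sub[OF C] by blast
  have eq: "nbrs V E v = nbrs C (restr E C) v \<union> (nbrs V E v \<inter> M)"
  proof
    show "nbrs V E v \<subseteq> nbrs C (restr E C) v \<union> (nbrs V E v \<inter> M)"
    proof
      fix u assume u: "u \<in> nbrs V E v"
      show "u \<in> nbrs C (restr E C) v \<union> (nbrs V E v \<inter> M)"
      proof (cases "u \<in> M")
        case True
        then show ?thesis using u by blast
      next
        case False
        have uV: "u \<in> V" and e: "E v u" using u by (auto simp: nbrs_def)
        have "restr E W v u" using vW uV False e by (simp add: restr_def)
        then have "u \<in> fcomp V E v" by (simp add: fcomp_def)
        then have "u \<in> C" using Cv by simp
        then show ?thesis using v e by (simp add: nbrs_def restr_def)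
      qed
    qed
  next
    show "nbrs C (restr E C) v \<union> (nbrs V E v \<inter> M) \<subseteq> nbrs V E v"
      using fcs_sub[OF C] by (auto simp: nbrs_def restr_def)
  qed
  have disj: "nbrs C (restr E C) v \<inter> (nbrs V E v \<inter> M) = {}"
    using fcs_sub[OF C] by (auto simp: nbrs_def)
  have f1: "finite (nbrs C (restr E C) v)" using fcs_finC[OF C] by (simp add: nbrs_def)
  have f2: "finite (nbrs V E v \<inter> M)" using finV[OF T c2] by (simp add: nbrs_def)
  have "card (nbrs V E v) = card (nbrs C (restr E C) v) + card (nbrs V E v \<inter> M)"
    by (subst eq) (rule card_Un_disjoint[OF f1 f2 disj])
  then show ?thesis by (simp add: degree_nbrs)
qed

lemma sumC:
  assumes C: "C \<in> fcomps V E"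
  shows "(\<Sum>v\<in>C. degree V E v) + 2 = 2 * card C + exits V E C"
proof -
  have "(\<Sum>v\<in>C. degree V E v) = (\<Sum>v\<in>C. degree C (restr E C) v) + exits V E C"
    unfolding exits_def by (simp add: deg_split[OF C] sum.distrib)
  moreover have "(\<Sum>v\<in>C. degree C (restr E C) v) + 2 = 2 * card C"
    by (rule handshake[OF fcs_tree[OF C]])
  ultimately show ?thesis by simp
qed

lemma sum_W: "(\<Sum>v\<in>W. f v) = (\<Sum>C\<in>fcomps V E. \<Sum>v\<in>C. f v)"
proof -
  have "(\<Sum>v\<in>\<Union>(fcomps V E). f v) = (\<Sum>C\<in>fcomps V E. \<Sum>v\<in>C. f v)"
  proof -
    have p: "\<forall>A\<in>fcomps V E. \<forall>B\<in>fcomps V E. A \<noteq> B \<longrightarrow> A \<inter> B = {}" using fcs_disj by blast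
    have f: "\<forall>A\<in>fcomps V E. finite A" using fcs_finC by blast
    show ?thesis using sum.Union_disjoint[OF f p, of f] by simp
  qed
  then show ?thesis using fcs_Union by simp
qed

lemma double_count: "(\<Sum>v\<in>W. card (nbrs V E v \<inter> M)) = (\<Sum>m\<in>M. degree V E m)"
proof -
  have fin: "finite V" using finV[OF T c2] .
  have MV: "M \<subseteq> V" using M_V[OF T c2] by blast
  have finM: "finite M" using finite_subset[OF MV fin] .
  let ?A = "Sigma W (\<lambda>v. nbrs V E v \<inter> M)"
  let ?B = "Sigma M (\<lambda>m. nbrs V E m)"
  have "card ?A = (\<Sum>v\<in>W. card (nbrs V E v \<inter> M))"
    by (rule card_SigmaI) (use fin in \<open>auto simp: nbrs_def\<close>)
  moreover have "card ?B = (\<Sum>m\<in>M. card (nbrs V E m))"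
    by (rule card_SigmaI) (use finM fin in \<open>auto simp: nbrs_def\<close>)
  moreover have "?B = (\<lambda>(v, m). (m, v)) ` ?A"
  proof
    show "?B \<subseteq> (\<lambda>(v, m). (m, v)) ` ?A"
    proof
      fix x assume x: "x \<in> ?B"
      then obtain m v where xv: "x = (m, v)" and m: "m \<in> M" and v: "v \<in> nbrs V E m" by blast
      have e: "E m v" and vV: "v \<in> V" using v by (auto simp: nbrs_def)
      have vM: "v \<notin> M" using M_indep[OF T c2 m] e by blast
      have "m \<in> nbrs V E v" using graph_sym[OF GG[OF T c2] e] M_V[OF T c2 m] by (simp add: nbrs_def)
      then have "(v, m) \<in> ?A" using vV vM m by simp
      then show "x \<in> (\<lambda>(v, m). (m, v)) ` ?A" using xv by force
    qed
  next
    show "(\<lambda>(v, m). (m, v)) ` ?A \<subseteq> ?B"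
    proof
      fix x assume "x \<in> (\<lambda>(v, m). (m, v)) ` ?A"
      then obtain y where y: "y \<in> ?A" and xy: "x = (\<lambda>(v, m). (m, v)) y" by blast
      obtain v m where yv: "y = (v, m)" by (cases y)
      have xv: "x = (m, v)" and v: "v \<in> W" and m: "m \<in> nbrs V E v \<inter> M" using y xy yv by auto
      have e: "E v m" using m by (simp add: nbrs_def)
      have "v \<in> nbrs V E m" using graph_sym[OF GG[OF T c2] e] v by (simp add: nbrs_def)
      then show "x \<in> ?B" using xv m by simp
    qed
  qed
  moreover have "inj_on (\<lambda>(v, m). (m, v)) ?A" by (auto simp: inj_on_def)
  ultimately show ?thesis by (simp add: card_image degree_nbrs)
qed

lemma ncomp: "card (fcomps V E) = card M + 1"
proof -
  have fin: "finite V" using finV[OF T c2] .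
  have MV: "M \<subseteq> V" using M_V[OF T c2] by blast
  have finM: "finite M" using finite_subset[OF MV fin] .
  have dM: "(\<Sum>m\<in>M. degree V E m) = 2 * card M" using M_deg[OF T c2] by simp
  have g: "(\<Sum>v\<in>V. degree V E v) + 2 = 2 * card V" by (rule handshake[OF T])
  have split: "(\<Sum>v\<in>V. degree V E v) = (\<Sum>v\<in>W. degree V E v) + (\<Sum>v\<in>M. degree V E v)"
    by (rule sum.subset_diff[OF MV fin])
  have "(\<Sum>C\<in>fcomps V E. (\<Sum>v\<in>C. degree V E v) + 2) = (\<Sum>C\<in>fcomps V E. 2 * card C + exits V E C)"
    by (rule sum.cong) (use sumC in auto)
  moreover have "(\<Sum>C\<in>fcomps V E. (\<Sum>v\<in>C. degree V E v) + 2) = (\<Sum>C\<in>fcomps V E. \<Sum>v\<in>C. degree V E v) + 2 * card (fcomps V E)"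
    by (subst sum.distrib) simp
  moreover have "(\<Sum>C\<in>fcomps V E. 2 * card C + exits V E C) = 2 * (\<Sum>C\<in>fcomps V E. card C) + (\<Sum>C\<in>fcomps V E. exits V E C)"
    by (subst sum.distrib) (simp add: sum_distrib_left)
  ultimately have "(\<Sum>C\<in>fcomps V E. \<Sum>v\<in>C. degree V E v) + 2 * card (fcomps V E) =
      2 * (\<Sum>C\<in>fcomps V E. card C) + (\<Sum>C\<in>fcomps V E. exits V E C)"
    by linarith
  moreover have "(\<Sum>C\<in>fcomps V E. \<Sum>v\<in>C. degree V E v) = (\<Sum>v\<in>W. degree V E v)"
    by (rule sum_W[symmetric])
  moreover have "(\<Sum>C\<in>fcomps V E. card C) = card W"
  proof -
    have "(\<Sum>v\<in>W. 1::nat) = (\<Sum>C\<in>fcomps V E. \<Sum>v\<in>C. 1)" by (rule sum_W)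
    moreover have "(\<Sum>v\<in>W. 1::nat) = card W" by simp
    moreover have "(\<Sum>C\<in>fcomps V E. \<Sum>v\<in>C. 1::nat) = (\<Sum>C\<in>fcomps V E. card C)" by simp
    ultimately show ?thesis by simp
  qed
  moreover have "(\<Sum>C\<in>fcomps V E. exits V E C) = 2 * card M"
    unfolding exits_def using sum_W[of "\<lambda>v. card (nbrs V E v \<inter> M)"] double_count dM by simp
  moreover have "card W = card V - card M" using MV fin by (simp add: card_Diff_subset finM)
  moreover have "card M \<le> card V" using MV fin by (simp add: card_mono)
  ultimately show ?thesis using g split dM by linarith
qed

lemma pure_false:
  assumes C: "C \<in> fcomps V E" and all2: "\<forall>v\<in>C. degree V E v = 2" and ex2: "exits V E C = 2"
  shows False
proof -
  have fin: "finite V" using finV[OF T c2] .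
  have G: "graph V E" using GG[OF T c2] .
  have CW: "C \<subseteq> W" using fcs_sub[OF C] .
  have CD: "C \<subseteq> D2 V E" using all2 CW by (auto simp: D2_def)
  have finC: "finite C" using fcs_finC[OF C] .
  have TC: "is_tree C (restr E C)" using fcs_tree[OF C] .
  have "\<exists>a\<in>C. nbrs V E a \<inter> M \<noteq> {}"
  proof (rule ccontr)
    assume "\<not> ?thesis"
    then have "exits V E C = 0" unfolding exits_def by simp
    then show False using ex2 by simp
  qed
  then obtain a m where a: "a \<in> C" and m: "m \<in> M" and am: "E a m" by (auto simp: nbrs_def)
  have pathC: "\<exists>q. is_path C E q \<and> hd q = u \<and> last q = v" if "u \<in> C" "v \<in> C" for u v
    using tree_conn[OF TC that] by (auto simp: is_path_restr)
  have only: "m' = m" if b: "b \<in> C" and m': "m' \<in> M" and bm: "E b m'" for b m'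
  proof -
    obtain q where q: "is_path C E q" "hd q = a" "last q = b" using pathC[OF a b] by blast
    have qd: "is_path (D2 V E) E q" using is_path_subset[OF q(1) CD] .
    have ab: "(restr E (D2 V E))\<^sup>*\<^sup>* a b" using path_rtr_last[OF qd] q(2,3) by simp
    have aD: "a \<in> D2 V E" and bD: "b \<in> D2 V E" using a b CD by auto
    have ma: "restr E (D2 V E) m a" using graph_sym[OF G am] M_D2[OF T c2 m] aD by (simp add: restr_def)
    have bm': "restr E (D2 V E) b m'" using bm M_D2[OF T c2 m'] bD by (simp add: restr_def)
    have mb: "(restr E (D2 V E))\<^sup>*\<^sup>* m b" by (rule converse_rtranclp_into_rtranclp[OF ma ab])
    have "(restr E (D2 V E))\<^sup>*\<^sup>* m m'" by (rule rtranclp.rtrancl_into_rtrancl[OF mb bm'])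
    then show "m' = m" using M_same[OF T c2 m m'] by simp
  qed
  define S where "S = {v \<in> C. E v m}"
  have "exits V E C = (\<Sum>v\<in>C. if E v m then 1 else 0)"
    unfolding exits_def
  proof (rule sum.cong)
    fix v assume v: "v \<in> C"
    have sub: "nbrs V E v \<inter> M \<subseteq> {m}"
    proof
      fix u assume "u \<in> nbrs V E v \<inter> M"
      then have u: "u \<in> M" "E v u" by (auto simp: nbrs_def)
      show "u \<in> {m}" using only[OF v u] by simp
    qed
    have "nbrs V E v \<inter> M = (if E v m then {m} else {})"
    proof (cases "E v m")
      case True
      then have "m \<in> nbrs V E v \<inter> M" using m M_V[OF T c2 m] by (simp add: nbrs_def)
      then show ?thesis using sub True by auto
    next
      case False
      then have "m \<notin> nbrs V E v" by (simp add: nbrs_def)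
      then show ?thesis using sub False by auto
    qed
    then show "card (nbrs V E v \<inter> M) = (if E v m then 1 else 0)" by simp
  qed simp
  also have "\<dots> = card S" unfolding S_def using sum.inter_filter[OF finC, of "\<lambda>_. 1::nat" "\<lambda>v. E v m"] by simp
  finally have "card S = 2" using ex2 by simp
  then obtain x y where S: "S = {x, y}" and xy: "x \<noteq> y" by (auto simp: card_2_iff)
  have x: "x \<in> C" "E x m" and y: "y \<in> C" "E y m" using S by (auto simp: S_def)
  obtain q where q: "is_path C E q" "hd q = x" "last q = y" using pathC[OF x(1) y(1)] by blast
  have qne: "q \<noteq> []" using is_path_ne[OF q(1)] .
  have lq: "length q \<ge> 2"
  proof (rule ccontr)
    assume "\<not> ?thesis"
    then have "length q - 1 = 0" by simp
    then have "last q = hd q" using qne by (simp add: last_conv_nth hd_conv_nth)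
    then show False using q xy by simp
  qed
  have qV: "is_path V E q" using is_path_subset[OF q(1)] CW by blast
  have mq: "m \<notin> set q" using q(1) CW m by (auto simp: is_path_def)
  have "is_path V E (q @ [m])" using is_path_append1[OF qV M_V[OF T c2 m] mq] q(3) y(2) by simp
  moreover have "length (q @ [m]) \<ge> 3" using lq by simp
  moreover have "E (last (q @ [m])) (hd (q @ [m]))" using graph_sym[OF G x(2)] q(2) qne by simp
  ultimately have "is_cycle V E (q @ [m])" by (simp add: is_cycle_def)
  then show False using tree_nocycle[OF T] by blast
qed

lemma nonleafy_exits:
  assumes C: "C \<in> fcomps V E" and nl: "\<forall>v\<in>C. degree V E v \<noteq> 1"
  shows "exits V E C \<ge> 3"
proof -
  have finC: "finite C" using fcs_finC[OF C] .
  have CV: "C \<subseteq> V" using fcs_sub[OF C] by blast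
  have ge2: "degree V E v \<ge> 2" if "v \<in> C" for v
  proof -
    have "v \<in> V" using that CV by blast
    then have "degree V E v \<ge> 1" by (rule deg_pos[OF T c2])
    moreover have "degree V E v \<noteq> 1" using nl that by blast
    ultimately show ?thesis by linarith
  qed
  have s: "(\<Sum>v\<in>C. degree V E v) + 2 = 2 * card C + exits V E C" using sumC[OF C] .
  show ?thesis
  proof (cases "\<exists>v\<in>C. degree V E v \<ge> 3")
    case True
    then obtain v where v: "v \<in> C" "degree V E v \<ge> 3" by blast
    have "(\<Sum>v\<in>C. degree V E v) = degree V E v + (\<Sum>u\<in>C - {v}. degree V E u)"
      using finC v(1) by (simp add: sum.remove)
    moreover have "(\<Sum>u\<in>C - {v}. degree V E u) \<ge> (\<Sum>u\<in>C - {v}. 2)"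
      by (rule sum_mono) (use ge2 in auto)
    moreover have "(\<Sum>u\<in>C - {v}. (2::nat)) = card (C - {v}) * 2" by simp
    moreover have "card (C - {v}) = card C - 1" using v(1) by simp
    moreover have "card C \<noteq> 0" using v(1) finC by auto
    ultimately show ?thesis using s v(2) by linarith
  next
    case False
    have all2: "\<forall>v\<in>C. degree V E v = 2"
    proof
      fix v assume v: "v \<in> C"
      have "degree V E v \<ge> 2" using ge2[OF v] .
      moreover have "\<not> degree V E v \<ge> 3" using False v by blast
      ultimately show "degree V E v = 2" by linarith
    qed
    then have "(\<Sum>v\<in>C. degree V E v) = 2 * card C" by simp
    then have "exits V E C = 2" using s by simp
    then show ?thesis using pure_false[OF C all2] by blast
  qed
qed


end



context
  fixes V E
  assumes T: "is_tree V E" and c2: "card V \<ge> 2"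
begin

abbreviation "WW \<equiv> V - Mset V E"
abbreviation "MM \<equiv> Mset V E"

lemma exits_sum: "(\<Sum>C\<in>fcomps V E. exits V E C) = 2 * card MM"
proof -
  have dM: "(\<Sum>m\<in>MM. degree V E m) = 2 * card MM" using M_deg[OF T c2] by simp
  show ?thesis
    unfolding exits_def using sum_W[OF T c2, of "\<lambda>v. card (nbrs V E v \<inter> MM)"] double_count[OF T c2] dM by simp
qed

definition leafy :: "nat set set" where
  "leafy = {C \<in> fcomps V E. \<exists>v\<in>C. degree V E v = 1}"

lemma leafy_count: "3 * card leafy \<ge> card MM + 3"
proof -
  have finF: "finite (fcomps V E)" using fcs_fin[OF T c2] .
  have LF: "leafy \<subseteq> fcomps V E" by (auto simp: leafy_def)
  have "(\<Sum>C\<in>fcomps V E. exits V E C) \<ge> (\<Sum>C\<in>fcomps V E - leafy. exits V E C)"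
    by (rule sum_mono2[OF finF]) auto
  moreover have "(\<Sum>C\<in>fcomps V E - leafy. exits V E C) \<ge> (\<Sum>C\<in>fcomps V E - leafy. 3)"
  proof (rule sum_mono)
    fix C assume C: "C \<in> fcomps V E - leafy"
    then have "\<forall>v\<in>C. degree V E v \<noteq> 1" by (auto simp: leafy_def)
    then show "3 \<le> exits V E C" using nonleafy_exits[OF T c2] C by blast
  qed
  moreover have "(\<Sum>C\<in>fcomps V E - leafy. (3::nat)) = card (fcomps V E - leafy) * 3" by simp
  moreover have "card (fcomps V E - leafy) = card (fcomps V E) - card leafy"
    using LF finF by (simp add: card_Diff_subset finite_subset)
  moreover have "card leafy \<le> card (fcomps V E)" using LF finF by (simp add: card_mono)
  ultimately show ?thesis using exits_sum ncomp[OF T c2] by linarith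
qed

lemma leafy_lam: "card leafy \<le> lam V E"
proof -
  have G: "graph V E" using GG[OF T c2] .
  define pick where "pick C = (SOME v. v \<in> C \<and> degree V E v = 1)" for C
  have pk: "pick C \<in> C \<and> degree V E (pick C) = 1" if "C \<in> leafy" for C
  proof -
    have "\<exists>v. v \<in> C \<and> degree V E v = 1" using that by (auto simp: leafy_def)
    then show ?thesis unfolding pick_def by (rule someI_ex)
  qed
  have LF: "leafy \<subseteq> fcomps V E" by (auto simp: leafy_def)
  have inj: "inj_on pick leafy"
  proof (rule inj_onI)
    fix C D assume C: "C \<in> leafy" and D: "D \<in> leafy" and eq: "pick C = pick D"
    have "pick C \<in> C \<inter> D" using pk[OF C] pk[OF D] eq by simp
    then show "C = D" using fcs_disj[OF T c2] C D LF by blast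
  qed
  define Q where "Q = pick ` leafy"
  have QL: "Q \<subseteq> leaves V E"
  proof
    fix v assume "v \<in> Q"
    then obtain C where C: "C \<in> leafy" "v = pick C" by (auto simp: Q_def)
    have "C \<subseteq> V" using fcs_sub[OF T c2] C(1) LF by blast
    then show "v \<in> leaves V E" using pk[OF C(1)] C(2) by (auto simp: leaves_def)
  qed
  have sep: "separated V E 20 Q"
    unfolding separated_def
  proof (intro ballI impI)
    fix u v assume u: "u \<in> Q" and v: "v \<in> Q" and uv: "u \<noteq> v"
    obtain C where C: "C \<in> leafy" "u = pick C" using u by (auto simp: Q_def)
    obtain D where D: "D \<in> leafy" "v = pick D" using v by (auto simp: Q_def)
    have CD: "C \<noteq> D" using C D uv by auto
    have uC: "u \<in> C" and vD: "v \<in> D" using pk[OF C(1)] pk[OF D(1)] C D by auto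
    have Cf: "C \<in> fcomps V E" and Df: "D \<in> fcomps V E" using C D LF by auto
    have uV: "u \<in> V" and vV: "v \<in> V" using QL u v by (auto simp: leaves_def)
    have vdeg: "degree V E v = 1" using pk[OF D(1)] D by simp
    show "20 \<le> dist V E u v"
    proof (rule dist_ge[OF T uV vV])
      fix p assume p: "is_path V E p" "hd p = u" "last p = v"
      have ne: "p \<noteq> []" using is_path_ne[OF p(1)] .
      have "\<exists>i<length p. p ! i \<in> MM"
      proof (rule ccontr)
        assume "\<not> ?thesis"
        then have "set p \<subseteq> WW" using p(1) by (auto simp: is_path_def in_set_conv_nth)
        then have pw: "is_path WW E p" by (rule is_path_mono[OF p(1)])
        have "(restr E WW)\<^sup>*\<^sup>* u v" using path_rtr_last[OF pw] p(2,3) by simp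
        then have "v \<in> fcomp V E u" by (simp add: fcomp_def)
        moreover have "C = fcomp V E u" using fcs_eq[OF T c2 Cf uC] .
        ultimately have "v \<in> C \<inter> D" using vD by simp
        then show False using fcs_disj[OF T c2 Cf Df CD] by blast
      qed
      then obtain i where i: "i < length p" "p ! i \<in> MM" by blast
      have "i + 20 < length p"
        by (rule run_long[OF T c2 i(2) p(1) i(1)]) (use p(3) vdeg in auto)
      then show "20 + 1 \<le> length p" by simp
    qed
  qed
  have "card Q \<le> lam V E" by (rule lam_ge[OF G QL sep])
  moreover have "card Q = card leafy" unfolding Q_def using inj by (simp add: card_image)
  ultimately show ?thesis by simp
qed

lemma LX_lam: "card (LX V E) + 3 \<le> 3 * lam V E"
  using leafy_count leafy_lam card_M[OF T c2] by linarith

end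



context
  fixes V E D
  assumes T: "is_tree V E" and c2: "card V \<ge> 2" and deg: "\<forall>v\<in>V. degree V E v \<le> D"
begin

lemma N_le_L: "card (V - D2 V E) + 2 \<le> 2 * card (leaves V E)"
proof -
  have fin: "finite V" using finV[OF T c2] .
  let ?L = "leaves V E" and ?D = "D2 V E"
  have LV: "?L \<subseteq> V" and DV: "?D \<subseteq> V" by (auto simp: leaves_def D2_def)
  have pt: "degree V E v + (if v \<in> ?L then 2 else 0) + (if v \<in> ?D then 1 else 0) \<ge> 3" if v: "v \<in> V" for v
  proof -
    have "degree V E v \<ge> 1" using deg_pos[OF T c2 v] .
    then show ?thesis using v by (auto simp: leaves_def D2_def)
  qed
  have "(\<Sum>v\<in>V. (3::nat)) \<le> (\<Sum>v\<in>V. degree V E v + (if v \<in> ?L then 2 else 0) + (if v \<in> ?D then 1 else 0))"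
    by (rule sum_mono) (use pt in auto)
  also have "\<dots> = (\<Sum>v\<in>V. degree V E v) + (\<Sum>v\<in>V. if v \<in> ?L then 2 else 0) + (\<Sum>v\<in>V. if v \<in> ?D then 1 else 0)"
    by (simp add: sum.distrib)
  also have "(\<Sum>v\<in>V. if v \<in> ?L then 2 else 0) = (\<Sum>v\<in>?L. (2::nat))"
  proof -
    have e: "{x \<in> V. x \<in> ?L} = ?L" using LV by blast
    show ?thesis using sum.inter_filter[OF fin, of "\<lambda>_. 2::nat" "\<lambda>v. v \<in> ?L"] unfolding e by simp
  qed
  also have "(\<Sum>v\<in>V. if v \<in> ?D then 1 else 0) = (\<Sum>v\<in>?D. (1::nat))"
  proof -
    have e: "{x \<in> V. x \<in> ?D} = ?D" using DV by blast
    show ?thesis using sum.inter_filter[OF fin, of "\<lambda>_. 1::nat" "\<lambda>v. v \<in> ?D"] unfolding e by simp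
  qed
  finally have "3 * card V \<le> (\<Sum>v\<in>V. degree V E v) + 2 * card ?L + card ?D" by simp
  moreover have "(\<Sum>v\<in>V. degree V E v) + 2 = 2 * card V" by (rule handshake[OF T])
  moreover have "card (V - ?D) = card V - card ?D" using DV fin by (simp add: card_Diff_subset finite_subset)
  moreover have "card ?D \<le> card V" using DV fin by (simp add: card_mono)
  ultimately show ?thesis by linarith
qed

lemma Pall_bound:
  assumes k: "k \<ge> 1"
  shows "real (card (Pall V E k)) \<ge>
    (real (card V) - real (1 + 40 * D) * real (card (V - D2 V E))) / real (k + 1) - real (card (LX V E))"
proof -
  have fin: "finite V" using finV[OF T c2] .
  let ?DC = "dcomps V E"
  have finDC: "finite ?DC" using dcomps_fin[OF T] .
  have LXs: "LX V E \<subseteq> ?DC" by (auto simp: LX_def)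
  have finLX: "finite (LX V E)" using finite_subset[OF LXs finDC] .
  have cP: "card (Pall V E k) = (\<Sum>X\<in>?DC. card X div (k + 1))" using Pall_props(4)[OF T] .
  have "(\<Sum>X\<in>LX V E. card X div (k + 1)) \<le> (\<Sum>X\<in>?DC. card X div (k + 1))"
    by (rule sum_mono2[OF finDC LXs]) simp
  then have r1: "real (card (Pall V E k)) \<ge> (\<Sum>X\<in>LX V E. real (card X div (k + 1)))"
    using cP by (metis of_nat_le_iff of_nat_sum)
  have each: "real (card X div (k + 1)) \<ge> real (card X) / real (k + 1) - 1" for X
  proof -
    have "real (card X) = real (card X div (k + 1)) * real (k + 1) + real (card X mod (k + 1))"
      by (metis of_nat_add of_nat_mult div_mult_mod_eq)
    moreover have "card X mod (k + 1) \<le> k + 1" using mod_less_divisor[of "k + 1" "card X"] by linarith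
    then have "real (card X mod (k + 1)) \<le> real (k + 1)" by (simp only: of_nat_le_iff)
    ultimately have "real (card X) \<le> (real (card X div (k + 1)) + 1) * real (k + 1)"
      by (simp add: algebra_simps)
    then have "real (card X) / real (k + 1) \<le> real (card X div (k + 1)) + 1"
      by (simp add: divide_le_eq)
    then show ?thesis by simp
  qed
  have r2: "(\<Sum>X\<in>LX V E. real (card X div (k + 1))) \<ge> (\<Sum>X\<in>LX V E. real (card X) / real (k + 1) - 1)"
    by (rule sum_mono) (rule each)
  have r3: "(\<Sum>X\<in>LX V E. real (card X) / real (k + 1) - 1) =
      real (\<Sum>X\<in>LX V E. card X) / real (k + 1) - real (card (LX V E))"
    by (simp add: sum_subtractf sum_divide_distrib)
  have cD2: "(\<Sum>X\<in>?DC. card X) = card (D2 V E)"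
  proof -
    have "card (\<Union>?DC) = (\<Sum>X\<in>?DC. card X)"
      by (rule card_Union_disjoint) (use dcomps_finX[OF T] dcomps_disj[OF T] in \<open>auto simp: pairwise_def disjnt_def\<close>)
    then show ?thesis using dcomps_Union[OF T] by simp
  qed
  have split: "(\<Sum>X\<in>?DC. card X) = (\<Sum>X\<in>?DC - LX V E. card X) + (\<Sum>X\<in>LX V E. card X)"
    by (rule sum.subset_diff[OF LXs finDC])
  have short: "(\<Sum>X\<in>?DC - LX V E. card X) \<le> (\<Sum>X\<in>?DC - LX V E. 40)"
    by (rule sum_mono) (auto simp: LX_def)
  have "(\<Sum>X\<in>?DC - LX V E. (40::nat)) = 40 * card (?DC - LX V E)" by simp
  also have "\<dots> \<le> 40 * card ?DC" using finDC by (simp add: card_mono)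
  also have "\<dots> \<le> 40 * (D * card (V - D2 V E))" using dcomps_count[OF T deg c2] by simp
  finally have sh: "(\<Sum>X\<in>?DC - LX V E. card X) \<le> 40 * D * card (V - D2 V E)" using short by simp
  have DV: "D2 V E \<subseteq> V" by (auto simp: D2_def)
  have cN: "card (V - D2 V E) = card V - card (D2 V E)" using DV fin by (simp add: card_Diff_subset finite_subset)
  have cDle: "card (D2 V E) \<le> card V" using DV fin by (simp add: card_mono)
  have big: "real (\<Sum>X\<in>LX V E. card X) \<ge> real (card V) - real (1 + 40 * D) * real (card (V - D2 V E))"
  proof -
    have "(\<Sum>X\<in>LX V E. card X) + 40 * D * card (V - D2 V E) + card (V - D2 V E) \<ge> card V"
      using split cD2 sh cN cDle by linarith
    then have "real (\<Sum>X\<in>LX V E. card X) + real (40 * D * card (V - D2 V E)) + real (card (V - D2 V E)) \<ge> real (card V)"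
      by (metis of_nat_add of_nat_le_iff)
    then show ?thesis by (simp add: algebra_simps)
  qed
  have kp: "real (k + 1) > 0" by simp
  have "real (\<Sum>X\<in>LX V E. card X) / real (k + 1) \<ge>
      (real (card V) - real (1 + 40 * D) * real (card (V - D2 V E))) / real (k + 1)"
    using big kp by (simp add: divide_right_mono)
  then show ?thesis using r1 r2 r3 by linarith
qed

end



lemma comb:
  assumes T: "is_tree V E" and c2: "card V \<ge> 2" and deg: "\<forall>v\<in>V. degree V E v \<le> D" and k: "k \<ge> 1"
  shows "real (card (Pall V E k)) \<ge>
    (real (card V) - real (2 * (1 + 40 * D) * (D + 1) ^ 19) * real (lam V E)) / real (k + 1) - 3 * real (lam V E)"
proof -
  have b1: "card (V - D2 V E) + 2 \<le> 2 * card (leaves V E)" using N_le_L[OF T c2 deg] .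
  have b2: "card (leaves V E) \<le> (D + 1) ^ 19 * lam V E" using leaves_bound[OF T deg] .
  have b3: "card (LX V E) + 3 \<le> 3 * lam V E" using LX_lam[OF T c2] .
  have "card (V - D2 V E) \<le> 2 * ((D + 1) ^ 19 * lam V E)" using b1 b2 by linarith
  then have "(1 + 40 * D) * card (V - D2 V E) \<le> (1 + 40 * D) * (2 * ((D + 1) ^ 19 * lam V E))"
    by (rule mult_left_mono) simp
  then have "real ((1 + 40 * D) * card (V - D2 V E)) \<le> real (2 * (1 + 40 * D) * (D + 1) ^ 19 * lam V E)"
    by (simp only: of_nat_le_iff mult_ac)
  then have c: "real (1 + 40 * D) * real (card (V - D2 V E)) \<le> real (2 * (1 + 40 * D) * (D + 1) ^ 19) * real (lam V E)"
    by (simp only: of_nat_mult)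
  have kp: "real (k + 1) > 0" by simp
  have "(real (card V) - real (2 * (1 + 40 * D) * (D + 1) ^ 19) * real (lam V E)) / real (k + 1) \<le>
      (real (card V) - real (1 + 40 * D) * real (card (V - D2 V E))) / real (k + 1)"
    using c kp by (simp add: divide_right_mono)
  moreover have "real (card (LX V E)) \<le> 3 * real (lam V E)" using b3 by linarith
  ultimately show ?thesis using Pall_bound[OF T c2 deg k] by linarith
qed

lemma kprime_ge:
  assumes T: "is_tree V E" and k: "k \<ge> 1"
    and P: "real (card (Pall V E k)) \<ge> real (card V) / (90 * real k)"
  shows "k \<le> kprime V E"
proof -
  have fin: "finite V" using T by (simp add: is_tree_def graph_def)
  have ne: "V \<noteq> {}" using T by (simp add: is_tree_def)
  have cV: "card V \<ge> 1" using fin ne by (simp add: Suc_le_eq card_gt_0_iff)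
  let ?S = "{k. \<exists>P. finite P \<and>
       (\<forall>p\<in>P. bare_path V E p \<and> length p = k + 1) \<and>
       (\<forall>p\<in>P. \<forall>q\<in>P. p \<noteq> q \<longrightarrow> set p \<inter> set q = {}) \<and>
       real (card P) \<ge> real (card V) / (90 * real k)}"
  have kS: "k \<in> ?S" using Pall_props[OF T, of k] P by blast
  have bnd: "j \<le> card V" if j: "j \<in> ?S" for j
  proof (rule ccontr)
    assume nj: "\<not> j \<le> card V"
    from j obtain P where PP: "finite P \<and> (\<forall>p\<in>P. bare_path V E p \<and> length p = j + 1) \<and>
       (\<forall>p\<in>P. \<forall>q\<in>P. p \<noteq> q \<longrightarrow> set p \<inter> set q = {}) \<and>
       real (card P) \<ge> real (card V) / (90 * real j)" unfolding mem_Collect_eq by (elim exE)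
    then have P: "finite P" "\<forall>p\<in>P. bare_path V E p \<and> length p = j + 1"
      "real (card P) \<ge> real (card V) / (90 * real j)" by auto
    have "real (card V) / (90 * real j) > 0" using cV nj by simp
    then have "real (card P) > 0" using P(3) by linarith
    then have "P \<noteq> {}" by (intro notI) simp
    then obtain p where p: "p \<in> P" by auto
    have pp: "is_path V E p" and lp: "length p = j + 1" using P(2) p by (auto simp: bare_path_def)
    have "j + 1 \<le> card V" using path_length_le[OF pp fin] lp by simp
    then show False using nj by simp
  qed
  have "finite ?S" by (rule finite_subset[of _ "{..card V}"]) (use bnd in auto)
  then show ?thesis unfolding kprime_def using kS by (rule Max_ge)
qed



lemma ln_le_2sqrt: assumes "x > (0::real)" shows "ln x \<le> 2 * sqrt x"
proof -
  have s: "sqrt x > 0" using assms by simp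
  have "ln x = 2 * ln (sqrt x)" using assms by (simp add: ln_sqrt)
  also have "\<dots> \<le> 2 * (sqrt x - 1)" using ln_le_minus_one[OF s] by simp
  finally show ?thesis by simp
qed

lemma K_bounds:
  fixes Ar x :: real
  assumes Ar: "Ar \<ge> 1" and x9: "x \<ge> 10 ^ 9" and xA: "x \<ge> Ar ^ 2"
  shows "ln x > 0" "1000 * x / ln x \<ge> 500 * Ar" "1000 * x / ln x \<ge> 2"
    "x ^ 2 / ln x / 10 ^ 6 \<ge> 1000 * x / ln x"
proof -
  have xp: "x > 1" using x9 by simp
  show yp: "ln x > 0" using xp by simp
  have sx: "sqrt x \<ge> Ar" using xA Ar by (simp add: real_le_rsqrt)
  have sx0: "sqrt x > 0" using xp by simp
  have y2: "ln x \<le> 2 * sqrt x" using ln_le_2sqrt xp by simp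
  have xx: "x = sqrt x * sqrt x" using xp by simp
  have "1000 * x / ln x \<ge> 1000 * x / (2 * sqrt x)"
    using yp y2 xp by (intro divide_left_mono) auto
  moreover have "1000 * x / (2 * sqrt x) = 500 * sqrt x"
    using sx0 by (subst xx) (simp add: field_simps)
  ultimately have K: "1000 * x / ln x \<ge> 500 * sqrt x" by simp
  then show "1000 * x / ln x \<ge> 500 * Ar" using sx by linarith
  then show "1000 * x / ln x \<ge> 2" using Ar by linarith
  have "x ^ 2 / ln x / 10 ^ 6 = x * (x / 10 ^ 6) / ln x" by (simp add: power2_eq_square field_simps)
  moreover have "x / 10 ^ 6 \<ge> 1000" using x9 by simp
  then have "x * 1000 \<le> x * (x / 10 ^ 6)" using xp by (intro mult_left_mono) auto
  then have h2: "1000 * x \<le> x * (x / 10 ^ 6)" by linarith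
  have "1000 * x / ln x \<le> x * (x / 10 ^ 6) / ln x" by (rule divide_right_mono[OF h2]) (use yp in simp)
  ultimately show "x ^ 2 / ln x / 10 ^ 6 \<ge> 1000 * x / ln x" by linarith
qed

lemma arith_main:
  fixes n l K Ar k :: real
  assumes K2: "K \<ge> 2" and KA: "50 * K \<ge> Ar" and Ar: "Ar \<ge> 0" and n: "n \<ge> 0"
    and l0: "l \<ge> 0" and l: "l < n / (100 * K)" and kK: "K \<le> k" "k \<le> K + 1"
  shows "(n - Ar * l) / (k + 1) - 3 * l \<ge> n / (90 * k)"
proof -
  have Kp: "K > 0" using K2 by simp
  have kp: "k > 0" using K2 kK by simp
  have l': "100 * K * l \<le> n" using l Kp by (simp add: field_simps)
  have "Ar * l * (100 * K) \<le> 50 * K * l * (100 * K) " using KA l0 Kp by (intro mult_right_mono mult_right_mono) auto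
  then have "Ar * l \<le> 50 * K * l" using Kp by simp
  also have "\<dots> \<le> n / 2" using l' by simp
  finally have a: "n - Ar * l \<ge> n / 2" by simp
  have b: "k + 1 \<le> 2 * K" using kK K2 by simp
  have "(n / 2) / (k + 1) \<le> (n - Ar * l) / (k + 1)" by (rule divide_right_mono[OF a]) (use kp in simp)
  moreover have "(n / 2) / (k + 1) \<ge> (n / 2) / (2 * K)" using b kp n by (intro divide_left_mono) auto
  ultimately have c: "(n - Ar * l) / (k + 1) \<ge> n / (4 * K)" by simp
  have d: "3 * l \<le> 3 * n / (100 * K)" using l by simp
  have e: "n / (4 * K) - 3 * n / (100 * K) = 22 * n / (100 * K)" using Kp by (simp add: field_simps)
  have f: "22 * n / (100 * K) \<ge> n / (90 * K)" using Kp n by (simp add: field_simps)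
  have g: "n / (90 * K) \<ge> n / (90 * k)" using Kp kK n by (intro divide_left_mono) auto
  show ?thesis using c d e f g by linarith
qed



theorem lemma2p3:
  fixes \<Delta> :: real
  assumes "\<Delta> > 0"
  shows "\<exists>N::nat. \<forall>n\<ge>N. \<forall>(V::nat set) E.
    is_tree V E \<and> card V = n \<and> (\<forall>v\<in>V. real (degree V E v) \<le> \<Delta>) \<longrightarrow>
      (real (lam V E) \<ge> real n * ln (ln (real n)) / (10 ^ 5 * ln (real n))
       \<or> (10 ^ 3 * ln (real n) / ln (ln (real n)) \<le> kT V E \<and> kT V E < 10 ^ 2 * ln (real n))
       \<or> (10 ^ 2 * ln (real n) \<le> kT V E \<and> kT V E < ln (real n) ^ 2 / ln (ln (real n)) / 10 ^ 6)
       \<or> kT V E = ln (real n) ^ 2 / ln (ln (real n)) / 10 ^ 6)"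
proof -
  define D where "D = nat \<lfloor>\<Delta>\<rfloor>"
  define A where "A = 2 * (1 + 40 * D) * (D + 1) ^ 19"
  define Ar where "Ar = real A"
  have p1: "(D + 1) ^ 19 \<ge> (1::nat)" by (rule one_le_power) simp
  have q1: "1 \<le> 2 * (1 + 40 * D)" by simp
  have "1 * 1 \<le> 2 * (1 + 40 * D) * (D + 1) ^ 19" by (rule mult_le_mono[OF q1 p1])
  then have A1: "A \<ge> 1" unfolding A_def by simp
  have Ar1: "Ar \<ge> 1" using A1 unfolding Ar_def by simp
  define X0 where "X0 = max (10 ^ 9) (Ar ^ 2)"
  define N0 where "N0 = nat \<lceil>exp X0\<rceil> + 3"
  show ?thesis
  proof (intro exI[of _ N0] allI impI)
    fix n V E
    assume n: "n \<ge> N0" and H: "is_tree V E \<and> card V = n \<and> (\<forall>v\<in>V. real (degree V E v) \<le> \<Delta>)"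
    have T: "is_tree V E" and cV: "card V = n" and degR: "\<forall>v\<in>V. real (degree V E v) \<le> \<Delta>" using H by auto
    have deg: "\<forall>v\<in>V. degree V E v \<le> D" using degR le_nat_floor unfolding D_def by blast
    have "exp X0 \<le> real_of_int \<lceil>exp X0\<rceil>" by (rule le_of_int_ceiling)
    also have "\<dots> = real (nat \<lceil>exp X0\<rceil>)" by simp
    also have "\<dots> \<le> real n" using n unfolding N0_def by simp
    finally have nX: "exp X0 \<le> real n" .
    have n3: "n \<ge> 3" using n unfolding N0_def by simp
    then have c2: "card V \<ge> 2" using cV by simp
    define x where "x = ln (real n)"
    have "X0 = ln (exp X0)" by simp
    also have "\<dots> \<le> x" unfolding x_def using nX n3 by (subst ln_le_cancel_iff) auto
    finally have xX: "X0 \<le> x" .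
    have x9: "x \<ge> 10 ^ 9" and xA: "x \<ge> Ar ^ 2" using xX unfolding X0_def by auto
    have yp: "ln x > 0" and KA: "10 ^ 3 * x / ln x \<ge> 500 * Ar" and K2: "10 ^ 3 * x / ln x \<ge> 2"
      and capK: "x ^ 2 / ln x / 10 ^ 6 \<ge> 10 ^ 3 * x / ln x"
      using K_bounds[OF Ar1 x9 xA] by auto
    define K where "K = 10 ^ 3 * x / ln x"
    define cap where "cap = x ^ 2 / ln x / 10 ^ 6"
    have kTd: "kT V E = min (real (kprime V E)) cap" unfolding kT_def cap_def x_def cV ..
    have xp: "x > 0" using x9 by simp
    show "real (lam V E) \<ge> real n * ln (ln (real n)) / (10 ^ 5 * ln (real n))
       \<or> (10 ^ 3 * ln (real n) / ln (ln (real n)) \<le> kT V E \<and> kT V E < 10 ^ 2 * ln (real n))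
       \<or> (10 ^ 2 * ln (real n) \<le> kT V E \<and> kT V E < ln (real n) ^ 2 / ln (ln (real n)) / 10 ^ 6)
       \<or> kT V E = ln (real n) ^ 2 / ln (ln (real n)) / 10 ^ 6"
    proof (cases "real (lam V E) \<ge> real n * ln (ln (real n)) / (10 ^ 5 * ln (real n))")
      case True
      then show ?thesis by blast
    next
      case False
      have eqthr: "real n * ln (ln (real n)) / (10 ^ 5 * ln (real n)) = real n / (100 * K)"
        unfolding K_def x_def[symmetric] using xp yp by (simp add: field_simps)
      have l: "real (lam V E) < real n / (100 * K)" using False eqthr by linarith
      define k where "k = nat \<lceil>K\<rceil>"
      have K0: "K \<ge> 0" using K2 K_def by simp
      have rk: "real k = real_of_int \<lceil>K\<rceil>" unfolding k_def using K0 by simp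
      have kK1: "K \<le> real k" using rk le_of_int_ceiling by simp
      have kK2: "real k \<le> K + 1" using rk of_int_ceiling_le_add_one by simp
      have k1: "k \<ge> 1" using kK1 K2 K_def by simp
      have comb': "real (card (Pall V E k)) \<ge>
          (real n - Ar * real (lam V E)) / (real k + 1) - 3 * real (lam V E)"
      proof -
        have c0: "real (card (Pall V E k)) \<ge> (real (card V) - Ar * real (lam V E)) / real (k + 1) - 3 * real (lam V E)"
          using comb[OF T c2 deg k1] unfolding Ar_def A_def .
        show ?thesis using c0 unfolding of_nat_add of_nat_1 cV .
      qed
      have ar: "(real n - Ar * real (lam V E)) / (real k + 1) - 3 * real (lam V E) \<ge> real n / (90 * real k)"
        by (rule arith_main) (use K2 KA Ar1 l kK1 kK2 K_def in auto)
      have "real (card (Pall V E k)) \<ge> real (card V) / (90 * real k)" unfolding cV using comb' ar by linarith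
      then have "k \<le> kprime V E" by (rule kprime_ge[OF T k1])
      then have "real (kprime V E) \<ge> K" using kK1 by linarith
      then have lo: "kT V E \<ge> K" using kTd capK K_def cap_def by simp
      have hi: "kT V E \<le> cap" using kTd by simp
      have Kx: "10 ^ 3 * ln (real n) / ln (ln (real n)) = K" unfolding K_def x_def ..
      have cx: "ln (real n) ^ 2 / ln (ln (real n)) / 10 ^ 6 = cap" unfolding cap_def x_def ..
      show ?thesis unfolding Kx cx using lo hi x_def by (cases "kT V E = cap") (auto simp: x_def[symmetric])
    qed
  qed
qed



end
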